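(* Let $G$ be a finitely generated nilpotent group with lower central series $G=G_1\ge G_2\ge\cdots\ge G_{k+1}=\{1\}$, and let $\phi\in\operatorname{Aut}(G)$. For each $i$, let $B_i=G_i/G_{i+1}$, let $\theta_i$ be the automorphism of $B_i$ induced by $\phi$, let $\bar\theta_i$ be the automorphism induced by $\theta_i$ on $B_i/\mathrm{Tor}(B_i)\cong\mathbb{Z}^{m_i}$, and let $M_i\in\mathrm{GL}(m_i,\mathbb{Z})$ be the matrix of $\bar\theta_i$ with respect to a fixed basis. If all eigenvalues of $M_1$ have absolute value $1$, then for every $i$ all eigenvalues of $M_i$ have absolute value $1$.
   Context: $G_{i+1}=[G_i,G]$; each $G_i$ is characteristic so $\phi$ restricts to $G_i$ and induces automorphisms of the quotients. $\mathrm{Tor}(B)$ denotes the torsion subgroup of the finitely generated abelian group $B$. *)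

theory Defs
  imports "HOL-Algebra.Coset" "HOL-Algebra.Generated_Groups" "Jordan_Normal_Form.Char_Poly"
begin

(* Lower central series, 0-based: lcs G 0 = G (the paper's G_1),
   lcs G (Suc n) = [lcs G n, G]  (so lcs G n is the paper's G_{n+1}). *)
primrec lcs :: "('a, 'b) monoid_scheme \<Rightarrow> nat \<Rightarrow> 'a set" where
  "lcs G 0 = carrier G"
| "lcs G (Suc n) = generate G
     {x \<otimes>\<^bsub>G\<^esub> y \<otimes>\<^bsub>G\<^esub> inv\<^bsub>G\<^esub> x \<otimes>\<^bsub>G\<^esub> inv\<^bsub>G\<^esub> y | x y. x \<in> lcs G n \<and> y \<in> carrier G}"

definition nilpotent_group :: "('a, 'b) monoid_scheme \<Rightarrow> bool" where
  "nilpotent_group G \<longleftrightarrow> group G \<and> (\<exists>k. lcs G k = {\<one>\<^bsub>G\<^esub>})"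

definition finitely_generated :: "('a, 'b) monoid_scheme \<Rightarrow> bool" where
  "finitely_generated G \<longleftrightarrow> (\<exists>S. finite S \<and> S \<subseteq> carrier G \<and> generate G S = carrier G)"

definition tor :: "('a, 'b) monoid_scheme \<Rightarrow> 'a set" where
  "tor H = {x \<in> carrier H. \<exists>k::nat. k > 0 \<and> x [^]\<^bsub>H\<^esub> k = \<one>\<^bsub>H\<^esub>}"

definition lcs_factor :: "('a, 'b) monoid_scheme \<Rightarrow> nat \<Rightarrow> 'a set monoid" where
  "lcs_factor G n = subgroup_generated G (lcs G n) Mod lcs G (Suc n)"

definition lcs_free_factor :: "('a, 'b) monoid_scheme \<Rightarrow> nat \<Rightarrow> 'a set set monoid" where
  "lcs_free_factor G n = lcs_factor G n Mod tor (lcs_factor G n)"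

definition induced_free_aut :: "('a \<Rightarrow> 'a) \<Rightarrow> 'a set set \<Rightarrow> 'a set set" where
  "induced_free_aut \<phi> D = (\<lambda>C. \<phi> ` C) ` D"

definition zcomb :: "('c, 'd) monoid_scheme \<Rightarrow> (nat \<Rightarrow> 'c) \<Rightarrow> (nat \<Rightarrow> int) \<Rightarrow> nat \<Rightarrow> 'c" where
  "zcomb F b a m = foldr (\<lambda>j acc. (b j [^]\<^bsub>F\<^esub> a j) \<otimes>\<^bsub>F\<^esub> acc) [0..<m] \<one>\<^bsub>F\<^esub>"

definition is_zbasis :: "('c, 'd) monoid_scheme \<Rightarrow> nat \<Rightarrow> (nat \<Rightarrow> 'c) \<Rightarrow> bool" where
  "is_zbasis F m b \<longleftrightarrow> (\<forall>j<m. b j \<in> carrier F) \<and>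
     (\<forall>x \<in> carrier F. \<exists>!a. (\<forall>j\<ge>m. a j = 0) \<and> x = zcomb F b a m)"

definition zcoords :: "('c, 'd) monoid_scheme \<Rightarrow> nat \<Rightarrow> (nat \<Rightarrow> 'c) \<Rightarrow> 'c \<Rightarrow> nat \<Rightarrow> int" where
  "zcoords F m b x = (THE a. (\<forall>j\<ge>m. a j = 0) \<and> x = zcomb F b a m)"

(* matrix of an endomorphism f of F w.r.t. the basis b (column j = coordinates of f(b_j)) *)
definition basis_matrix :: "('c, 'd) monoid_scheme \<Rightarrow> nat \<Rightarrow> (nat \<Rightarrow> 'c) \<Rightarrow> ('c \<Rightarrow> 'c) \<Rightarrow> int mat" where
  "basis_matrix F m b f = mat m m (\<lambda>(k, j). zcoords F m b (f (b j)) k)"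

definition lcs_matrix :: "('a, 'b) monoid_scheme \<Rightarrow> ('a \<Rightarrow> 'a) \<Rightarrow> nat \<Rightarrow> nat \<Rightarrow> (nat \<Rightarrow> 'a set set) \<Rightarrow> int mat" where
  "lcs_matrix G \<phi> n m b = basis_matrix (lcs_free_factor G n) m b (induced_free_aut \<phi>)"

end

theory Submission
  imports Defs "Jordan_Normal_Form.Spectral_Radius" "HOL-Real_Asymp.Real_Asymp"
begin

definition gcomm :: "('a, 'b) monoid_scheme \<Rightarrow> 'a \<Rightarrow> 'a \<Rightarrow> 'a" where
  "gcomm G x y = x \<otimes>\<^bsub>G\<^esub> y \<otimes>\<^bsub>G\<^esub> inv\<^bsub>G\<^esub> x \<otimes>\<^bsub>G\<^esub> inv\<^bsub>G\<^esub> y"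

lemma lcs_Suc': "lcs G (Suc n) = generate G {gcomm G x y | x y. x \<in> lcs G n \<and> y \<in> carrier G}"
  by (simp add: gcomm_def)

declare lcs.simps(2)[simp del]

context group begin

lemma inv_l_cancel[simp]: "x \<in> carrier G \<Longrightarrow> y \<in> carrier G \<Longrightarrow> inv x \<otimes> (x \<otimes> y) = y"
  by (simp flip: m_assoc)
lemma inv_r_cancel[simp]: "x \<in> carrier G \<Longrightarrow> y \<in> carrier G \<Longrightarrow> x \<otimes> (inv x \<otimes> y) = y"
  by (simp flip: m_assoc)

lemma hom_inv': "h \<in> hom G G \<Longrightarrow> x \<in> carrier G \<Longrightarrow> h (inv x) = inv (h x)"
  using group_hom.hom_inv[of G G h x] by (simp add: group_hom_def group_hom_axioms_def is_group)

lemma gcomm_closed[simp]: "x \<in> carrier G \<Longrightarrow> y \<in> carrier G \<Longrightarrow> gcomm G x y \<in> carrier G"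
  by (simp add: gcomm_def)

lemma lcs_subgroup: "subgroup (lcs G n) G"
proof (induction n)
  case 0 then show ?case by (simp add: subgroup_self)
next
  case (Suc n)
  have "{gcomm G x y | x y. x \<in> lcs G n \<and> y \<in> carrier G} \<subseteq> carrier G"
    using subgroup.subset[OF Suc] by auto
  then show ?case unfolding lcs_Suc' by (rule generate_is_subgroup)
qed

lemma lcs_carrier: "x \<in> lcs G n \<Longrightarrow> x \<in> carrier G"
  using subgroup.subset[OF lcs_subgroup] by auto

lemma gcomm_in_lcs: "x \<in> lcs G n \<Longrightarrow> y \<in> carrier G \<Longrightarrow> gcomm G x y \<in> lcs G (Suc n)"
  unfolding lcs_Suc' by (rule generate.incl) auto

lemma gcomm_conj: "g \<in> carrier G \<Longrightarrow> x \<in> carrier G \<Longrightarrow> y \<in> carrier G \<Longrightarrow>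
   g \<otimes> gcomm G x y \<otimes> inv g = gcomm G (g \<otimes> x \<otimes> inv g) (g \<otimes> y \<otimes> inv g)"
  by (simp add: gcomm_def m_assoc inv_mult_group)

lemma lcs_normal: "lcs G n \<lhd> G"
proof (induction n)
  case 0 then show ?case by (simp add: normal_self)
next
  case (Suc n)
  show ?case unfolding lcs_Suc'
  proof (rule normal_generateI)
    show "{gcomm G x y | x y. x \<in> lcs G n \<and> y \<in> carrier G} \<subseteq> carrier G"
      using lcs_carrier by auto
    fix h g assume h: "h \<in> {gcomm G x y | x y. x \<in> lcs G n \<and> y \<in> carrier G}" and g: "g \<in> carrier G"
    then obtain x y where xy: "h = gcomm G x y" "x \<in> lcs G n" "y \<in> carrier G" by auto
    have "g \<otimes> x \<otimes> inv g \<in> lcs G n"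
      using Suc xy g by (simp add: normal.inv_op_closed2)
    then show "g \<otimes> h \<otimes> inv g \<in> {gcomm G x y | x y. x \<in> lcs G n \<and> y \<in> carrier G}"
      using xy g lcs_carrier[OF xy(2)] by (auto simp: gcomm_conj)
  qed
qed

lemma lcs_Suc_sub: "lcs G (Suc n) \<subseteq> lcs G n"
proof -
  have "{gcomm G x y | x y. x \<in> lcs G n \<and> y \<in> carrier G} \<subseteq> lcs G n"
  proof clarify
    fix x y assume x: "x \<in> lcs G n" and y: "y \<in> carrier G"
    have xc: "x \<in> carrier G" using lcs_carrier[OF x] .
    have "y \<otimes> inv x \<otimes> inv y \<in> lcs G n"
      using normal.inv_op_closed2[OF lcs_normal y subgroup.m_inv_closed[OF lcs_subgroup x]] .
    then have "x \<otimes> (y \<otimes> inv x \<otimes> inv y) \<in> lcs G n"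
      using x by (simp add: subgroup.m_closed[OF lcs_subgroup])
    then show "gcomm G x y \<in> lcs G n" using xc y by (simp add: gcomm_def m_assoc)
  qed
  then show ?thesis unfolding lcs_Suc' by (rule generate_subgroup_incl[OF _ lcs_subgroup])
qed

lemma lcs_mono: "m \<le> n \<Longrightarrow> lcs G n \<subseteq> lcs G m"
  by (induction n rule: dec_induct) (use lcs_Suc_sub in auto)

lemma gcomm_hom: "h \<in> hom G G \<Longrightarrow> x \<in> carrier G \<Longrightarrow> y \<in> carrier G \<Longrightarrow>
   h (gcomm G x y) = gcomm G (h x) (h y)"
  by (simp add: gcomm_def hom_mult hom_inv')

lemma lcs_hom: assumes h: "h \<in> hom G G" shows "x \<in> lcs G n \<Longrightarrow> h x \<in> lcs G n"
proof (induction n arbitrary: x)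
  case 0 then show ?case using h by (simp add: hom_in_carrier)
next
  case (Suc n)
  let ?S = "{gcomm G x y | x y. x \<in> lcs G n \<and> y \<in> carrier G}"
  have hS: "h z \<in> ?S" if "z \<in> ?S" for z
  proof -
    from that obtain x y where xy: "z = gcomm G x y" "x \<in> lcs G n" "y \<in> carrier G" by auto
    have "h z = gcomm G (h x) (h y)" using xy h lcs_carrier[OF xy(2)] by (simp add: gcomm_hom)
    moreover have "h y \<in> carrier G" using h xy by (simp add: hom_in_carrier)
    ultimately show ?thesis using Suc.IH[OF xy(2)] by blast
  qed
  have Sc: "?S \<subseteq> carrier G" using lcs_carrier by auto
  from Suc.prems have "x \<in> generate G ?S" by (simp only: lcs_Suc')
  then have "h x \<in> generate G ?S"
  proof (induction x rule: generate.induct)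
    case one then show ?case using h by (simp add: hom_one generate.one)
  next
    case (incl z) then show ?case using hS by (simp add: generate.incl)
  next
    case (inv z)
    have "h (inv z) = inv (h z)" using h inv Sc by (intro hom_inv') auto
    then show ?case using hS[OF inv] by (simp add: generate.inv)
  next
    case (eng a b)
    have "a \<in> carrier G" "b \<in> carrier G" using eng generate_in_carrier[OF Sc] by auto
    then show ?case using eng h by (simp add: hom_mult generate.eng)
  qed
  then show ?case by (simp only: lcs_Suc')
qed

end

lemma (in comm_group) tor_subgroup: "subgroup (tor G) G"
proof (rule subgroupI)
  show "tor G \<subseteq> carrier G" by (auto simp: tor_def)
  show "tor G \<noteq> {}" by (auto simp: tor_def intro!: exI[of _ "\<one>"] exI[of _ "1::nat"])
  fix a assume "a \<in> tor G"
  then obtain k::nat where a: "a \<in> carrier G" "k > 0" "a [^] k = \<one>" unfolding tor_def by blast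
  then show "inv a \<in> tor G" by (auto simp: tor_def nat_pow_inv intro!: exI[of _ k])
next
  fix a b assume "a \<in> tor G" "b \<in> tor G"
  then obtain k l :: nat where a: "a \<in> carrier G" "k > 0" "a [^] k = \<one>"
    and b: "b \<in> carrier G" "l > 0" "b [^] l = \<one>" unfolding tor_def by blast
  have "(a \<otimes> b) [^] (k * l) = a [^] (k * l) \<otimes> b [^] (k * l)"
    using a b by (simp add: nat_pow_distrib)
  moreover have "a [^] (k * l) = \<one>" using a by (metis nat_pow_pow nat_pow_one)
  moreover have "b [^] (k * l) = \<one>" using b by (metis nat_pow_pow nat_pow_one mult.commute)
  ultimately have "(a \<otimes> b) [^] (k * l) = \<one>" by simp
  then show "a \<otimes> b \<in> tor G" using a b by (auto simp: tor_def intro!: exI[of _ "k*l"])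
qed

locale ab_quot = normal N K for N and K (structure) +
  assumes commN: "x \<in> carrier K \<Longrightarrow> y \<in> carrier K \<Longrightarrow> x \<otimes> y \<otimes> inv x \<otimes> inv y \<in> N"
begin

abbreviation "BB \<equiv> K Mod N"
abbreviation "TT \<equiv> tor BB"
abbreviation "FF \<equiv> BB Mod TT"
definition pr :: "'a \<Rightarrow> 'a set set" where "pr x = TT #>\<^bsub>BB\<^esub> (N #> x)"

lemma BB_group: "group BB" by (rule factorgroup_is_group)

lemma rcos_eqI: assumes "x \<in> carrier K" "y \<in> carrier K" "x \<otimes> inv y \<in> N"
  shows "N #> x = N #> y"
proof -
  have "x = (x \<otimes> inv y) \<otimes> y" using assms by (simp add: m_assoc)
  then have "x \<in> N #> y" using assms rcosI[of "x \<otimes> inv y" N y] subset by auto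
  then show ?thesis using repr_independence[of x N y] assms subgroup_axioms by auto
qed

lemma BB_comm: "comm_group BB"
proof (rule group.group_comm_groupI[OF BB_group])
  fix X Y assume "X \<in> carrier BB" "Y \<in> carrier BB"
  then obtain x y where xy: "x \<in> carrier K" "y \<in> carrier K" "X = N #> x" "Y = N #> y"
    by (auto simp: carrier_FactGroup)
  have "N #> (x \<otimes> y) = N #> (y \<otimes> x)"
  proof (rule rcos_eqI)
    have "x \<otimes> y \<otimes> inv (y \<otimes> x) = x \<otimes> y \<otimes> inv x \<otimes> inv y"
      using xy by (simp add: inv_mult_group m_assoc)
    then show "x \<otimes> y \<otimes> inv (y \<otimes> x) \<in> N" using commN xy by simp
  qed (use xy in auto)
  then show "X \<otimes>\<^bsub>BB\<^esub> Y = Y \<otimes>\<^bsub>BB\<^esub> X" using xy by (simp add: rcos_sum)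
qed

lemma TT_subgroup: "subgroup TT BB" by (rule comm_group.tor_subgroup[OF BB_comm])
lemma TT_normal: "TT \<lhd> BB" using comm_group.normal_iff_subgroup[OF BB_comm] TT_subgroup by auto

lemma FF_comm: "comm_group FF" by (rule comm_group.abelian_FactGroup[OF BB_comm TT_subgroup])
lemma FF_group: "group FF" using FF_comm comm_group.axioms(2) by blast

lemma pr_hom: "pr \<in> hom K FF"
proof -
  have "(\<lambda>a. N #> a) \<in> hom K BB" by (rule r_coset_hom_Mod)
  moreover have "(\<lambda>a. TT #>\<^bsub>BB\<^esub> a) \<in> hom BB FF" by (rule normal.r_coset_hom_Mod[OF TT_normal])
  ultimately have "(\<lambda>a. TT #>\<^bsub>BB\<^esub> a) \<circ> (\<lambda>a. N #> a) \<in> hom K FF" by (rule Group.hom_compose)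
  then show ?thesis by (simp add: pr_def[abs_def] o_def)
qed

lemma pr_carrier: "x \<in> carrier K \<Longrightarrow> pr x \<in> carrier FF"
  using pr_hom by (simp add: hom_in_carrier)

lemma pr_surj: "D \<in> carrier FF \<Longrightarrow> \<exists>x \<in> carrier K. pr x = D"
  by (auto simp: carrier_FactGroup pr_def)

lemma pr_mult: "x \<in> carrier K \<Longrightarrow> y \<in> carrier K \<Longrightarrow> pr (x \<otimes> y) = pr x \<otimes>\<^bsub>FF\<^esub> pr y"
  using pr_hom by (simp add: hom_mult)

lemma pr_int_pow: "x \<in> carrier K \<Longrightarrow> pr (x [^] (a::int)) = pr x [^]\<^bsub>FF\<^esub> a"
  using hom_int_pow[OF pr_hom _ is_group FF_group] by simp

lemma pr_nat_pow: "x \<in> carrier K \<Longrightarrow> pr (x [^] (a::nat)) = pr x [^]\<^bsub>FF\<^esub> a"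
  using hom_nat_pow[OF pr_hom _ is_group FF_group] by simp

lemma pr_inv: "x \<in> carrier K \<Longrightarrow> pr (inv x) = inv\<^bsub>FF\<^esub> pr x"
  using group_hom.hom_inv[of K FF pr x] pr_hom FF_group is_group
  by (simp add: group_hom_def group_hom_axioms_def)

lemma pr_one: "pr \<one> = \<one>\<^bsub>FF\<^esub>"
  using pr_hom is_group FF_group by (simp add: group_hom.hom_one group_hom_def group_hom_axioms_def)

lemma rcos_in_N: "x \<in> carrier K \<Longrightarrow> N #> x = N \<longleftrightarrow> x \<in> N"
  by (metis rcos_const is_group rcos_self subgroup_axioms)

lemma pr_eq_one_iff: assumes x: "x \<in> carrier K"
  shows "pr x = \<one>\<^bsub>FF\<^esub> \<longleftrightarrow> (\<exists>e::nat. e > 0 \<and> x [^] e \<in> N)"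
proof -
  have c: "N #> x \<in> carrier BB" using x by (auto simp: carrier_FactGroup)
  have "pr x = \<one>\<^bsub>FF\<^esub> \<longleftrightarrow> N #> x \<in> TT"
    unfolding pr_def one_FactGroup
    by (metis c TT_subgroup BB_group group.rcos_self subgroup.rcos_const)
  also have "\<dots> \<longleftrightarrow> (\<exists>e::nat. e > 0 \<and> N #> (x [^] e) = N)"
    using c x by (auto simp: tor_def FactGroup_pow)
  also have "\<dots> \<longleftrightarrow> (\<exists>e::nat. e > 0 \<and> x [^] e \<in> N)"
    using x rcos_in_N by auto
  finally show ?thesis .
qed

lemma FF_torsion_free: assumes D: "D \<in> carrier FF" and e: "e > 0" and De: "D [^]\<^bsub>FF\<^esub> (e::nat) = \<one>\<^bsub>FF\<^esub>"
  shows "D = \<one>\<^bsub>FF\<^esub>"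
proof -
  obtain x where x: "x \<in> carrier K" "pr x = D" using pr_surj[OF D] by auto
  have "pr (x [^] e) = \<one>\<^bsub>FF\<^esub>" using x De by (simp add: pr_nat_pow)
  then obtain f::nat where f: "f > 0" "(x [^] e) [^] f \<in> N"
    using pr_eq_one_iff[of "x [^] e"] x by auto
  then have "x [^] (e * f) \<in> N" using x by (simp add: nat_pow_pow)
  then have "pr x = \<one>\<^bsub>FF\<^esub>" using pr_eq_one_iff[OF x(1)] e f by (meson mult_pos_pos)
  then show ?thesis using x by simp
qed

end

context ab_quot begin

lemma TT_explicit: "TT = {N #> y | y. y \<in> carrier K \<and> (\<exists>e::nat. e > 0 \<and> y [^] e \<in> N)}"
proof -
  have "TT = {C \<in> carrier BB. \<exists>e::nat. e > 0 \<and> C [^]\<^bsub>BB\<^esub> e = N}" by (simp add: tor_def)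
  also have "\<dots> = {N #> y | y. y \<in> carrier K \<and> (\<exists>e::nat. e > 0 \<and> y [^] e \<in> N)}"
  proof safe
    fix C e assume C: "C \<in> carrier BB" and e: "(0::nat) < e" "C [^]\<^bsub>BB\<^esub> e = N"
    then obtain y where y: "y \<in> carrier K" "C = N #> y" by (auto simp: carrier_FactGroup)
    then have "N #> (y [^] e) = N" using e by (simp add: FactGroup_pow)
    then have "y [^] e \<in> N" using rcos_in_N y by simp
    then show "\<exists>y. C = N #> y \<and> y \<in> carrier K \<and> (\<exists>e::nat. e > 0 \<and> y [^] e \<in> N)" using y e by auto
  next
    fix y e assume y: "y \<in> carrier K" "(0::nat) < e" "y [^] e \<in> N"
    show "N #> y \<in> carrier BB" using y by (auto simp: carrier_FactGroup)
    show "\<exists>e::nat. e > 0 \<and> (N #> y) [^]\<^bsub>BB\<^esub> e = N"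
      using y rcos_in_N[of "y [^] e"] by (auto simp: FactGroup_pow)
  qed
  finally show ?thesis .
qed

lemma pr_explicit: assumes x: "x \<in> carrier K"
  shows "pr x = {N #> (y \<otimes> x) | y. y \<in> carrier K \<and> (\<exists>e::nat. e > 0 \<and> y [^] e \<in> N)}"
proof -
  have "pr x = (\<Union>t\<in>TT. {t <#> (N #> x)})" by (simp add: pr_def r_coset_def)
  also have "\<dots> = {N #> (y \<otimes> x) | y. y \<in> carrier K \<and> (\<exists>e::nat. e > 0 \<and> y [^] e \<in> N)}"
    unfolding TT_explicit using x
  proof (safe, goal_cases)
    case (1 _ _ y e) then show ?case by (auto simp: rcos_sum)
  next
    case (2 _ y e)
    then have "N #> (y \<otimes> x) = (N #> y) <#> (N #> x)" by (simp add: rcos_sum)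
    then show ?case using 2 by blast
  qed
  finally show ?thesis .
qed

end

definition lpr :: "('a, 'b) monoid_scheme \<Rightarrow> nat \<Rightarrow> 'a \<Rightarrow> 'a set set" where
  "lpr G i = ab_quot.pr (lcs G (Suc i)) (subgroup_generated G (lcs G i))"

context group begin

lemma carrier_SG: "carrier (subgroup_generated G (lcs G i)) = lcs G i"
  by (rule subgroup.carrier_subgroup_generated_subgroup[OF lcs_subgroup])

lemma lcs_ab_quot: "ab_quot (lcs G (Suc i)) (subgroup_generated G (lcs G i))"
proof -
  interpret K: group "subgroup_generated G (lcs G i)" by simp
  have sub: "subgroup (lcs G (Suc i)) (subgroup_generated G (lcs G i))"
    by (rule subgroup_of_subgroup_generated[OF lcs_Suc_sub lcs_subgroup])
  have nor: "lcs G (Suc i) \<lhd> subgroup_generated G (lcs G i)"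
    unfolding K.normal_inv_iff
  proof (intro conjI sub ballI)
    fix x h assume x: "x \<in> carrier (subgroup_generated G (lcs G i))" and h: "h \<in> lcs G (Suc i)"
    have "x \<otimes> h \<otimes> inv x \<in> lcs G (Suc i)" using x h lcs_normal lcs_carrier carrier_SG
      by (simp add: normal.inv_op_closed2)
    then show "x \<otimes>\<^bsub>subgroup_generated G (lcs G i)\<^esub> h \<otimes>\<^bsub>subgroup_generated G (lcs G i)\<^esub>
       inv\<^bsub>subgroup_generated G (lcs G i)\<^esub> x \<in> lcs G (Suc i)" using x by simp
  qed
  show ?thesis
  proof (rule ab_quot.intro[OF nor], unfold_locales)
    fix x y assume x: "x \<in> carrier (subgroup_generated G (lcs G i))" and y: "y \<in> carrier (subgroup_generated G (lcs G i))"
    have "gcomm G x y \<in> lcs G (Suc i)" using x y carrier_SG lcs_carrier by (auto intro: gcomm_in_lcs)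
    then show "x \<otimes>\<^bsub>subgroup_generated G (lcs G i)\<^esub> y \<otimes>\<^bsub>subgroup_generated G (lcs G i)\<^esub>
       inv\<^bsub>subgroup_generated G (lcs G i)\<^esub> x \<otimes>\<^bsub>subgroup_generated G (lcs G i)\<^esub>
       inv\<^bsub>subgroup_generated G (lcs G i)\<^esub> y \<in> lcs G (Suc i)"
      using x y K.m_closed by (simp add: gcomm_def)
  qed
qed

lemma F_eq: "lcs_free_factor G i = ab_quot.FF (lcs G (Suc i)) (subgroup_generated G (lcs G i))"
  by (simp add: lcs_free_factor_def lcs_factor_def)

lemma F_comm: "comm_group (lcs_free_factor G i)"
  using ab_quot.FF_comm[OF lcs_ab_quot] F_eq by simp

lemma F_group: "group (lcs_free_factor G i)"
  using F_comm comm_group.axioms(2) by blast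

lemma lpr_hom: "lpr G i \<in> hom (subgroup_generated G (lcs G i)) (lcs_free_factor G i)"
  using ab_quot.pr_hom[OF lcs_ab_quot] F_eq by (simp add: lpr_def)

lemma lpr_carrier: "x \<in> lcs G i \<Longrightarrow> lpr G i x \<in> carrier (lcs_free_factor G i)"
  using lpr_hom carrier_SG by (metis hom_in_carrier)

lemma lpr_surj: "D \<in> carrier (lcs_free_factor G i) \<Longrightarrow> \<exists>x \<in> lcs G i. lpr G i x = D"
  using ab_quot.pr_surj[OF lcs_ab_quot] F_eq carrier_SG by (simp add: lpr_def)

lemma lpr_mult: "x \<in> lcs G i \<Longrightarrow> y \<in> lcs G i \<Longrightarrow> lpr G i (x \<otimes> y) = lpr G i x \<otimes>\<^bsub>lcs_free_factor G i\<^esub> lpr G i y"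
  using ab_quot.pr_mult[OF lcs_ab_quot] F_eq carrier_SG by (simp add: lpr_def)

lemma lpr_int_pow: "x \<in> lcs G i \<Longrightarrow> lpr G i (x [^] (a::int)) = lpr G i x [^]\<^bsub>lcs_free_factor G i\<^esub> a"
  using ab_quot.pr_int_pow[OF lcs_ab_quot, of x i a] F_eq carrier_SG int_pow_subgroup_generated[of x "lcs G i" a]
  by (simp add: lpr_def)

lemma lpr_inv: "x \<in> lcs G i \<Longrightarrow> lpr G i (inv x) = inv\<^bsub>lcs_free_factor G i\<^esub> lpr G i x"
  using ab_quot.pr_inv[OF lcs_ab_quot, of x i] F_eq carrier_SG by (simp add: lpr_def)

lemma lpr_one: "lpr G i \<one> = \<one>\<^bsub>lcs_free_factor G i\<^esub>"
  using ab_quot.pr_one[OF lcs_ab_quot, of i] F_eq by (simp add: lpr_def)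

lemma lpr_eq_one_iff: "x \<in> lcs G i \<Longrightarrow> lpr G i x = \<one>\<^bsub>lcs_free_factor G i\<^esub> \<longleftrightarrow> (\<exists>e::nat. e > 0 \<and> x [^] e \<in> lcs G (Suc i))"
  using ab_quot.pr_eq_one_iff[OF lcs_ab_quot, of x i] F_eq carrier_SG by (simp add: lpr_def pow_subgroup_generated)

lemma F_torsion_free: "D \<in> carrier (lcs_free_factor G i) \<Longrightarrow> e > 0 \<Longrightarrow> D [^]\<^bsub>lcs_free_factor G i\<^esub> (e::nat) = \<one>\<^bsub>lcs_free_factor G i\<^esub>
  \<Longrightarrow> D = \<one>\<^bsub>lcs_free_factor G i\<^esub>"
  using ab_quot.FF_torsion_free[OF lcs_ab_quot] F_eq by simp

lemma lpr_explicit: "x \<in> lcs G i \<Longrightarrow> lpr G i x =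
  {lcs G (Suc i) #> (y \<otimes> x) | y. y \<in> lcs G i \<and> (\<exists>e::nat. e > 0 \<and> y [^] e \<in> lcs G (Suc i))}"
  using ab_quot.pr_explicit[OF lcs_ab_quot, of x i] carrier_SG
  by (simp add: lpr_def pow_subgroup_generated r_coset_def)

end

lemma (in comm_group) comm_trivial: assumes "a \<in> carrier G" "b \<in> carrier G"
  shows "a \<otimes> b \<otimes> inv a \<otimes> inv b = \<one>"
proof -
  have "a \<otimes> b \<otimes> inv a \<otimes> inv b = a \<otimes> (b \<otimes> (inv a \<otimes> inv b))"
    using assms by (simp add: m_assoc)
  also have "\<dots> = a \<otimes> (inv a \<otimes> (b \<otimes> inv b))"
    using assms m_lcomm[of b "inv a" "inv b"] by simp
  finally show ?thesis using assms by simp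
qed

context group begin

lemma lcs_img: assumes h: "h \<in> hom G G" and h': "h' \<in> hom G G"
  and inv1: "\<And>x. x \<in> carrier G \<Longrightarrow> h (h' x) = x"
  shows "h ` lcs G j = lcs G j"
proof
  show "h ` lcs G j \<subseteq> lcs G j" using lcs_hom[OF h] by auto
  show "lcs G j \<subseteq> h ` lcs G j"
  proof
    fix z assume z: "z \<in> lcs G j"
    then have "z = h (h' z)" using inv1 lcs_carrier by auto
    then show "z \<in> h ` lcs G j" using lcs_hom[OF h' z] by blast
  qed
qed

lemma img_rcos: assumes h: "h \<in> hom G G" and N: "N \<subseteq> carrier G" and z: "z \<in> carrier G"
  shows "h ` (N #> z) = (h ` N) #> h z"
  using h z subsetD[OF N] by (force simp: r_coset_def hom_mult)

lemma lpr_nat: assumes h: "h \<in> hom G G" and h': "h' \<in> hom G G"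
  and inv1: "\<And>x. x \<in> carrier G \<Longrightarrow> h (h' x) = x"
  and inv2: "\<And>x. x \<in> carrier G \<Longrightarrow> h' (h x) = x"
  and x: "x \<in> lcs G i"
shows "induced_free_aut h (lpr G i x) = lpr G i (h x)"
proof -
  let ?N = "lcs G (Suc i)"
  have hx: "h x \<in> lcs G i" using lcs_hom[OF h x] .
  have xc: "x \<in> carrier G" using lcs_carrier[OF x] .
  have imgN: "h ` ?N = ?N" by (rule lcs_img[OF h h' inv1])
  have Nc: "?N \<subseteq> carrier G" using lcs_carrier by auto
  have hpow: "h (y [^] (e::nat)) = h y [^] e" if "y \<in> carrier G" for y e
    using hom_nat_pow[OF h that is_group is_group] .
  have cos: "h ` (?N #> (y \<otimes> x)) = ?N #> (h y \<otimes> h x)" if "y \<in> lcs G i" for y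
    using img_rcos[OF h Nc, of "y \<otimes> x"] imgN lcs_carrier[OF that] xc h by (simp add: hom_mult)
  let ?P = "\<lambda>y. y \<in> lcs G i \<and> (\<exists>e::nat. e > 0 \<and> y [^] e \<in> ?N)"
  have P1: "?P (h y)" if "?P y" for y
  proof -
    from that obtain e::nat where y: "y \<in> lcs G i" "0 < e" "y [^] e \<in> ?N" by blast
    have "h y [^] e \<in> ?N" using hpow[OF lcs_carrier[OF y(1)]] lcs_hom[OF h y(3)] by simp
    then show ?thesis using lcs_hom[OF h y(1)] y(2) by blast
  qed
  have P2: "?P (h' y)" if "?P y" for y
  proof -
    from that obtain e::nat where y: "y \<in> lcs G i" "0 < e" "y [^] e \<in> ?N" by blast
    have "h' y [^] e = h' (y [^] e)" using hom_nat_pow[OF h' lcs_carrier[OF y(1)] is_group is_group] by simp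
    then have "h' y [^] e \<in> ?N" using lcs_hom[OF h' y(3)] by simp
    then show ?thesis using lcs_hom[OF h' y(1)] y(2) by blast
  qed
  have "(\<lambda>C. h ` C) ` {?N #> (y \<otimes> x) | y. ?P y} = {?N #> (y \<otimes> h x) | y. ?P y}"
  proof (rule equalityI; rule subsetI)
    fix C assume "C \<in> (\<lambda>C. h ` C) ` {?N #> (y \<otimes> x) | y. ?P y}"
    then obtain y where y: "?P y" "C = h ` (?N #> (y \<otimes> x))" by blast
    have "C = ?N #> (h y \<otimes> h x)" using y cos by blast
    then show "C \<in> {?N #> (y \<otimes> h x) | y. ?P y}" using P1[OF y(1)] by blast
  next
    fix C assume "C \<in> {?N #> (y \<otimes> h x) | y. ?P y}"
    then obtain y where y: "?P y" "C = ?N #> (y \<otimes> h x)" by blast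
    have yc: "y \<in> carrier G" using y lcs_carrier by blast
    have "C = h ` (?N #> (h' y \<otimes> x))" using y(2) cos[of "h' y"] P2[OF y(1)] inv1[OF yc] by simp
    then show "C \<in> (\<lambda>C. h ` C) ` {?N #> (y \<otimes> x) | y. ?P y}" using P2[OF y(1)] by blast
  qed
  then show ?thesis unfolding induced_free_aut_def lpr_explicit[OF x] lpr_explicit[OF hx] .
qed

definition cpair :: "nat \<Rightarrow> 'a \<Rightarrow> 'a \<Rightarrow> 'a set set" where
  "cpair i u v = lpr G (Suc i) (gcomm G u v)"

lemma lcs_0: "lcs G 0 = carrier G" by simp

lemma gcomm_in_lcs': "u \<in> lcs G i \<Longrightarrow> v \<in> carrier G \<Longrightarrow> gcomm G u v \<in> lcs G (Suc i)"
  by (rule gcomm_in_lcs)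

lemma lpr_one_of_mem: assumes w: "w \<in> lcs G (Suc i)" shows "lpr G i w = \<one>\<^bsub>lcs_free_factor G i\<^esub>"
proof -
  have w': "w \<in> lcs G i" using w lcs_Suc_sub by blast
  have "w [^] (1::nat) \<in> lcs G (Suc i)" using w lcs_carrier[OF w] by simp
  then show ?thesis by (subst lpr_eq_one_iff[OF w']) (intro exI[of _ "1::nat"], simp)
qed

lemma lcs_pow_closed: "u \<in> lcs G i \<Longrightarrow> u [^] (e::nat) \<in> lcs G i"
  by (induction e) (auto simp: subgroup.one_closed[OF lcs_subgroup] subgroup.m_closed[OF lcs_subgroup])

lemma conj_inv: assumes w: "w \<in> lcs G (Suc i)" and g: "g \<in> carrier G"
  shows "lpr G (Suc i) (g \<otimes> w \<otimes> inv g) = lpr G (Suc i) w"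
proof -
  have wc: "w \<in> carrier G" using lcs_carrier[OF w] .
  have eq: "g \<otimes> w \<otimes> inv g = inv (gcomm G w g) \<otimes> w"
    using wc g by (simp add: gcomm_def inv_mult_group m_assoc)
  have c: "gcomm G w g \<in> lcs G (Suc (Suc i))" using gcomm_in_lcs[OF w g] .
  then have c': "inv (gcomm G w g) \<in> lcs G (Suc (Suc i))"
    using subgroup.m_inv_closed[OF lcs_subgroup] by blast
  have c'': "inv (gcomm G w g) \<in> lcs G (Suc i)" using c' lcs_Suc_sub by blast
  interpret F: comm_group "lcs_free_factor G (Suc i)" by (rule F_comm)
  have "lpr G (Suc i) (inv (gcomm G w g) \<otimes> w) = lpr G (Suc i) (inv (gcomm G w g)) \<otimes>\<^bsub>lcs_free_factor G (Suc i)\<^esub> lpr G (Suc i) w"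
    by (rule lpr_mult[OF c'' w])
  also have "\<dots> = lpr G (Suc i) w"
    using lpr_one_of_mem[OF c'] lpr_carrier[OF w] by simp
  finally show ?thesis using eq by simp
qed

lemma cpair_carrier: "u \<in> lcs G i \<Longrightarrow> v \<in> carrier G \<Longrightarrow> cpair i u v \<in> carrier (lcs_free_factor G (Suc i))"
  unfolding cpair_def by (intro lpr_carrier gcomm_in_lcs)

lemma cpair_mult1: assumes u: "u \<in> lcs G i" and u': "u' \<in> lcs G i" and v: "v \<in> carrier G"
  shows "cpair i (u \<otimes> u') v = cpair i u v \<otimes>\<^bsub>lcs_free_factor G (Suc i)\<^esub> cpair i u' v"
proof -
  have uc: "u \<in> carrier G" "u' \<in> carrier G" using u u' lcs_carrier by auto
  have eq: "gcomm G (u \<otimes> u') v = (u \<otimes> gcomm G u' v \<otimes> inv u) \<otimes> gcomm G u v"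
    using uc v by (simp add: gcomm_def inv_mult_group m_assoc)
  have c1: "gcomm G u' v \<in> lcs G (Suc i)" "gcomm G u v \<in> lcs G (Suc i)"
    using gcomm_in_lcs u u' v by auto
  have c2: "u \<otimes> gcomm G u' v \<otimes> inv u \<in> lcs G (Suc i)"
    using c1 uc lcs_normal by (simp add: normal.inv_op_closed2)
  have "cpair i (u \<otimes> u') v = cpair i u' v \<otimes>\<^bsub>lcs_free_factor G (Suc i)\<^esub> cpair i u v"
    unfolding cpair_def eq lpr_mult[OF c2 c1(2)] conj_inv[OF c1(1) uc(1)] ..
  interpret F: comm_group "lcs_free_factor G (Suc i)" by (rule F_comm)
  show ?thesis using \<open>cpair i (u \<otimes> u') v = _\<close> F.m_comm[OF cpair_carrier[OF u' v] cpair_carrier[OF u v]] by simp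
qed

lemma cpair_mult2: assumes u: "u \<in> lcs G i" and v: "v \<in> carrier G" and v': "v' \<in> carrier G"
  shows "cpair i u (v \<otimes> v') = cpair i u v \<otimes>\<^bsub>lcs_free_factor G (Suc i)\<^esub> cpair i u v'"
proof -
  have uc: "u \<in> carrier G" using u lcs_carrier by auto
  have eq: "gcomm G u (v \<otimes> v') = gcomm G u v \<otimes> (v \<otimes> gcomm G u v' \<otimes> inv v)"
    using uc v v' by (simp add: gcomm_def inv_mult_group m_assoc)
  have c1: "gcomm G u v' \<in> lcs G (Suc i)" "gcomm G u v \<in> lcs G (Suc i)"
    using gcomm_in_lcs u v v' by auto
  have c2: "v \<otimes> gcomm G u v' \<otimes> inv v \<in> lcs G (Suc i)"
    using c1 v lcs_normal by (simp add: normal.inv_op_closed2)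
  show ?thesis
    unfolding cpair_def eq lpr_mult[OF c1(2) c2] conj_inv[OF c1(1) v] ..
qed

lemma cpair_one2: "u \<in> lcs G i \<Longrightarrow> cpair i u \<one> = \<one>\<^bsub>lcs_free_factor G (Suc i)\<^esub>"
  using lcs_carrier[of u i] by (simp add: cpair_def gcomm_def lpr_one)

lemma cpair_one1: "v \<in> carrier G \<Longrightarrow> cpair i \<one> v = \<one>\<^bsub>lcs_free_factor G (Suc i)\<^esub>"
  by (simp add: cpair_def gcomm_def lpr_one)

lemma cpair_inv2: assumes u: "u \<in> lcs G i" and v: "v \<in> carrier G"
  shows "cpair i u (inv v) = inv\<^bsub>lcs_free_factor G (Suc i)\<^esub> cpair i u v"
proof -
  interpret F: comm_group "lcs_free_factor G (Suc i)" by (rule F_comm)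
  have "cpair i u v \<otimes>\<^bsub>lcs_free_factor G (Suc i)\<^esub> cpair i u (inv v) = \<one>\<^bsub>lcs_free_factor G (Suc i)\<^esub>"
    using cpair_mult2[OF u v, of "inv v"] v cpair_one2[OF u] by simp
  moreover have cA: "cpair i u v \<in> carrier (lcs_free_factor G (Suc i))" using cpair_carrier[OF u v] .
  moreover have cX: "cpair i u (inv v) \<in> carrier (lcs_free_factor G (Suc i))" using cpair_carrier[OF u] v by simp
  ultimately have "cpair i u (inv v) \<otimes>\<^bsub>lcs_free_factor G (Suc i)\<^esub> cpair i u v = \<one>\<^bsub>lcs_free_factor G (Suc i)\<^esub>"
    using F.m_comm[OF cX cA] by simp
  from F.inv_equality[OF this cA cX] show ?thesis by simp
qed

lemma cpair_pow1: assumes u: "u \<in> lcs G i" and v: "v \<in> carrier G"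
  shows "cpair i (u [^] (e::nat)) v = cpair i u v [^]\<^bsub>lcs_free_factor G (Suc i)\<^esub> e"
proof (induction e)
  case 0 then show ?case using v by (simp add: cpair_one1)
next
  case (Suc e)
  have "u [^] e \<in> lcs G i" using lcs_pow_closed[OF u] by blast
  then show ?case using Suc cpair_mult1[OF _ u v, of "u [^] e"] by simp
qed

lemma cpair_pow2: assumes u: "u \<in> lcs G i" and v: "v \<in> carrier G"
  shows "cpair i u (v [^] (e::nat)) = cpair i u v [^]\<^bsub>lcs_free_factor G (Suc i)\<^esub> e"
proof (induction e)
  case 0 then show ?case using u by (simp add: cpair_one2)
next
  case (Suc e)
  then show ?case using cpair_mult2[OF u _ v, of "v [^] e"] v by simp
qed

lemma cpair_tor1: assumes u: "u \<in> lcs G i" and v: "v \<in> carrier G" and e: "e > 0" and ue: "u [^] (e::nat) \<in> lcs G (Suc i)"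
  shows "cpair i u v = \<one>\<^bsub>lcs_free_factor G (Suc i)\<^esub>"
proof -
  have "cpair i (u [^] e) v = \<one>\<^bsub>lcs_free_factor G (Suc i)\<^esub>"
    unfolding cpair_def by (rule lpr_one_of_mem[OF gcomm_in_lcs[OF ue v]])
  then have "cpair i u v [^]\<^bsub>lcs_free_factor G (Suc i)\<^esub> e = \<one>\<^bsub>lcs_free_factor G (Suc i)\<^esub>"
    using cpair_pow1[OF u v, of e] by simp
  from F_torsion_free[OF cpair_carrier[OF u v] e this] show ?thesis .
qed

lemma cpair_lcs1: assumes u: "u \<in> lcs G i" and w: "w \<in> lcs G 1"
  shows "cpair i u w = \<one>\<^bsub>lcs_free_factor G (Suc i)\<^esub>"
proof -
  let ?S = "{gcomm G x y | x y. x \<in> lcs G 0 \<and> y \<in> carrier G}"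
  let ?F = "lcs_free_factor G (Suc i)"
  interpret F: comm_group ?F by (rule F_comm)
  have Sc: "?S \<subseteq> carrier G" by auto
  have gen: "cpair i u g = \<one>\<^bsub>?F\<^esub>" if "g \<in> ?S" for g
  proof -
    from that obtain x y where xy: "g = gcomm G x y" "x \<in> carrier G" "y \<in> carrier G" by auto
    note cc = cpair_carrier[OF u]
    have "cpair i u g = cpair i u (x \<otimes> y \<otimes> inv x \<otimes> inv y)" using xy by (simp add: gcomm_def)
    also have "\<dots> = cpair i u (x \<otimes> y \<otimes> inv x) \<otimes>\<^bsub>?F\<^esub> cpair i u (inv y)"
      using xy by (intro cpair_mult2[OF u]) auto
    also have "\<dots> = cpair i u (x \<otimes> y) \<otimes>\<^bsub>?F\<^esub> cpair i u (inv x) \<otimes>\<^bsub>?F\<^esub> cpair i u (inv y)"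
      using xy by (subst cpair_mult2[OF u]) auto
    also have "\<dots> = cpair i u x \<otimes>\<^bsub>?F\<^esub> cpair i u y \<otimes>\<^bsub>?F\<^esub> inv\<^bsub>?F\<^esub> cpair i u x \<otimes>\<^bsub>?F\<^esub> inv\<^bsub>?F\<^esub> cpair i u y"
      using xy by (simp only: cpair_mult2[OF u] cpair_inv2[OF u])
    also have "\<dots> = \<one>\<^bsub>?F\<^esub>"
      by (rule F.comm_trivial[OF cc[OF xy(2)] cc[OF xy(3)]])
    finally show ?thesis .
  qed
  have "w \<in> generate G ?S" using w by (simp add: lcs_Suc'[of G 0, simplified])
  then show ?thesis
  proof (induction w rule: generate.induct)
    case one then show ?case using cpair_one2[OF u] by simp
  next
    case (incl h) then show ?case using gen by simp
  next
    case (inv h)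
    have hc: "h \<in> carrier G" using inv Sc by blast
    show ?case by (simp add: cpair_inv2[OF u hc] gen[OF inv])
  next
    case (eng a b)
    have ac: "a \<in> carrier G" using eng generate_in_carrier[OF Sc] by blast
    have bc: "b \<in> carrier G" using eng generate_in_carrier[OF Sc] by blast
    show ?case using eng.IH by (simp add: cpair_mult2[OF u ac bc])
  qed
qed

lemma cpair_tor2: assumes u: "u \<in> lcs G i" and v: "v \<in> carrier G" and e: "e > 0" and ve: "v [^] (e::nat) \<in> lcs G 1"
  shows "cpair i u v = \<one>\<^bsub>lcs_free_factor G (Suc i)\<^esub>"
proof -
  have "cpair i u v [^]\<^bsub>lcs_free_factor G (Suc i)\<^esub> e = \<one>\<^bsub>lcs_free_factor G (Suc i)\<^esub>"
    using cpair_lcs1[OF u ve] cpair_pow2[OF u v, of e] by simp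
  from F_torsion_free[OF cpair_carrier[OF u v] e this] show ?thesis .
qed

end

context group begin

lemma cpair_cong: assumes u: "u \<in> lcs G i" and u': "u' \<in> lcs G i" and v: "v \<in> carrier G" and v': "v' \<in> carrier G"
  and eu: "lpr G i u = lpr G i u'" and ev: "lpr G 0 v = lpr G 0 v'"
  shows "cpair i u v = cpair i u' v'"
proof -
  interpret F: comm_group "lcs_free_factor G i" by (rule F_comm)
  interpret F0: comm_group "lcs_free_factor G 0" by (rule F_comm)
  interpret F1: comm_group "lcs_free_factor G (Suc i)" by (rule F_comm)
  have uc: "u \<in> carrier G" "u' \<in> carrier G" using u u' lcs_carrier by auto
  define d where "d = u \<otimes> inv u'"
  have d: "d \<in> lcs G i" unfolding d_def using u u' lcs_subgroup
    by (simp add: subgroup.m_closed subgroup.m_inv_closed)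
  have "lpr G i d = \<one>\<^bsub>lcs_free_factor G i\<^esub>"
    unfolding d_def using u u' eu
    by (simp add: lpr_mult lpr_inv subgroup.m_inv_closed[OF lcs_subgroup] lpr_carrier)
  then obtain e::nat where e: "e > 0" "d [^] e \<in> lcs G (Suc i)" using lpr_eq_one_iff[OF d] by blast
  have cd: "cpair i d v = \<one>\<^bsub>lcs_free_factor G (Suc i)\<^esub>" by (rule cpair_tor1[OF d v e])
  have "u = d \<otimes> u'" using uc by (simp add: d_def m_assoc)
  then have 1: "cpair i u v = cpair i u' v" using cpair_mult1[OF d u' v] cd cpair_carrier[OF u' v] by simp
  define d' where "d' = v \<otimes> inv v'"
  have d'c: "d' \<in> carrier G" unfolding d'_def using v v' by simp
  have "lpr G 0 d' = \<one>\<^bsub>lcs_free_factor G 0\<^esub>"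
    unfolding d'_def using v v' ev lpr_mult[of v 0 "inv v'"] lpr_inv[of v' 0] lpr_carrier[of v' 0]
    by simp
  then obtain f::nat where f: "f > 0" "d' [^] f \<in> lcs G (Suc 0)" using lpr_eq_one_iff[of d' 0] d'c by auto
  have cd': "cpair i u' d' = \<one>\<^bsub>lcs_free_factor G (Suc i)\<^esub>" by (rule cpair_tor2[OF u' d'c f(1)]) (use f in simp)
  have "v = d' \<otimes> v'" using v v' by (simp add: d'_def m_assoc)
  then have 2: "cpair i u' v = cpair i u' v'" using cpair_mult2[OF u' d'c v'] cd' cpair_carrier[OF u' v'] by simp
  show ?thesis using 1 2 by simp
qed

definition cF :: "nat \<Rightarrow> 'a set set \<Rightarrow> 'a set set \<Rightarrow> 'a set set" where
  "cF i D E = cpair i (SOME u. u \<in> lcs G i \<and> lpr G i u = D) (SOME v. v \<in> carrier G \<and> lpr G 0 v = E)"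

lemma cF_lpr: assumes u: "u \<in> lcs G i" and v: "v \<in> carrier G"
  shows "cF i (lpr G i u) (lpr G 0 v) = cpair i u v"
proof -
  let ?u = "SOME x. x \<in> lcs G i \<and> lpr G i x = lpr G i u"
  let ?v = "SOME x. x \<in> carrier G \<and> lpr G 0 x = lpr G 0 v"
  have 1: "?u \<in> lcs G i \<and> lpr G i ?u = lpr G i u" by (rule someI[of _ u]) (use u in simp)
  have 2: "?v \<in> carrier G \<and> lpr G 0 ?v = lpr G 0 v" by (rule someI[of _ v]) (use v in simp)
  show ?thesis unfolding cF_def using cpair_cong[of ?u i u ?v v] 1 2 u v by simp
qed

lemma F_rep: "D \<in> carrier (lcs_free_factor G i) \<Longrightarrow> \<exists>u. u \<in> lcs G i \<and> D = lpr G i u"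
  using lpr_surj by metis

lemma cF_carrier: assumes "D \<in> carrier (lcs_free_factor G i)" "E \<in> carrier (lcs_free_factor G 0)"
  shows "cF i D E \<in> carrier (lcs_free_factor G (Suc i))"
proof -
  obtain u v where "u \<in> lcs G i" "D = lpr G i u" "v \<in> lcs G 0" "E = lpr G 0 v" using F_rep assms by metis
  then show ?thesis using cF_lpr cpair_carrier by simp
qed

lemma cF_mult1: assumes D: "D \<in> carrier (lcs_free_factor G i)" and D': "D' \<in> carrier (lcs_free_factor G i)"
  and E: "E \<in> carrier (lcs_free_factor G 0)"
  shows "cF i (D \<otimes>\<^bsub>lcs_free_factor G i\<^esub> D') E = cF i D E \<otimes>\<^bsub>lcs_free_factor G (Suc i)\<^esub> cF i D' E"
proof -
  obtain u u' v where uv: "u \<in> lcs G i" "D = lpr G i u" "u' \<in> lcs G i" "D' = lpr G i u'" "v \<in> lcs G 0" "E = lpr G 0 v"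
    using F_rep assms by metis
  have "D \<otimes>\<^bsub>lcs_free_factor G i\<^esub> D' = lpr G i (u \<otimes> u')" using uv lpr_mult by simp
  moreover have "u \<otimes> u' \<in> lcs G i" using uv subgroup.m_closed[OF lcs_subgroup] by blast
  ultimately show ?thesis using uv cF_lpr cpair_mult1 by simp
qed

lemma cF_mult2: assumes D: "D \<in> carrier (lcs_free_factor G i)"
  and E: "E \<in> carrier (lcs_free_factor G 0)" and E': "E' \<in> carrier (lcs_free_factor G 0)"
  shows "cF i D (E \<otimes>\<^bsub>lcs_free_factor G 0\<^esub> E') = cF i D E \<otimes>\<^bsub>lcs_free_factor G (Suc i)\<^esub> cF i D E'"
proof -
  obtain u v v' where uv: "u \<in> lcs G i" "D = lpr G i u" "v \<in> lcs G 0" "E = lpr G 0 v" "v' \<in> lcs G 0" "E' = lpr G 0 v'"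
    using F_rep assms by metis
  have "E \<otimes>\<^bsub>lcs_free_factor G 0\<^esub> E' = lpr G 0 (v \<otimes> v')" using uv lpr_mult by simp
  moreover have "v \<otimes> v' \<in> carrier G" using uv by simp
  ultimately show ?thesis using uv cF_lpr cpair_mult2 by simp
qed

lemma cF_hom1: "E \<in> carrier (lcs_free_factor G 0) \<Longrightarrow> (\<lambda>D. cF i D E) \<in> hom (lcs_free_factor G i) (lcs_free_factor G (Suc i))"
  by (rule homI) (auto simp: cF_carrier cF_mult1)

lemma cF_hom2: "D \<in> carrier (lcs_free_factor G i) \<Longrightarrow> (\<lambda>E. cF i D E) \<in> hom (lcs_free_factor G 0) (lcs_free_factor G (Suc i))"
  by (rule homI) (auto simp: cF_carrier cF_mult2)

lemma cF_pow1: "D \<in> carrier (lcs_free_factor G i) \<Longrightarrow> E \<in> carrier (lcs_free_factor G 0) \<Longrightarrow>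
  cF i (D [^]\<^bsub>lcs_free_factor G i\<^esub> (a::int)) E = cF i D E [^]\<^bsub>lcs_free_factor G (Suc i)\<^esub> a"
  using hom_int_pow[OF cF_hom1 _ F_group F_group] by simp

lemma cF_pow2: "D \<in> carrier (lcs_free_factor G i) \<Longrightarrow> E \<in> carrier (lcs_free_factor G 0) \<Longrightarrow>
  cF i D (E [^]\<^bsub>lcs_free_factor G 0\<^esub> (a::int)) = cF i D E [^]\<^bsub>lcs_free_factor G (Suc i)\<^esub> a"
  using hom_int_pow[OF cF_hom2 _ F_group F_group] by simp

end

locale autpair = group G for G (structure) +
  fixes h h' :: "'a \<Rightarrow> 'a"
  assumes h: "h \<in> hom G G" and h': "h' \<in> hom G G"
    and inv1: "\<And>x. x \<in> carrier G \<Longrightarrow> h (h' x) = x"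
    and inv2: "\<And>x. x \<in> carrier G \<Longrightarrow> h' (h x) = x"
begin

abbreviation "th \<equiv> induced_free_aut h"

lemma th_lpr: "x \<in> lcs G i \<Longrightarrow> th (lpr G i x) = lpr G i (h x)"
  by (rule lpr_nat[OF h h' inv1 inv2])

lemma th_carrier: "D \<in> carrier (lcs_free_factor G i) \<Longrightarrow> th D \<in> carrier (lcs_free_factor G i)"
  using F_rep[of D i] th_lpr lpr_carrier lcs_hom[OF h] by metis

lemma th_mult: assumes "D \<in> carrier (lcs_free_factor G i)" "D' \<in> carrier (lcs_free_factor G i)"
  shows "th (D \<otimes>\<^bsub>lcs_free_factor G i\<^esub> D') = th D \<otimes>\<^bsub>lcs_free_factor G i\<^esub> th D'"
proof -
  obtain u u' where uv: "u \<in> lcs G i" "D = lpr G i u" "u' \<in> lcs G i" "D' = lpr G i u'"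
    using F_rep assms by metis
  have uu: "u \<otimes> u' \<in> lcs G i" using uv subgroup.m_closed[OF lcs_subgroup] by blast
  have hu: "h u \<in> lcs G i" "h u' \<in> lcs G i" using uv lcs_hom[OF h] by auto
  have "th (D \<otimes>\<^bsub>lcs_free_factor G i\<^esub> D') = th (lpr G i (u \<otimes> u'))" using uv lpr_mult by simp
  also have "\<dots> = lpr G i (h u \<otimes> h u')" using th_lpr[OF uu] uv lcs_carrier h by (simp add: hom_mult)
  also have "\<dots> = th D \<otimes>\<^bsub>lcs_free_factor G i\<^esub> th D'" using lpr_mult[OF hu] uv th_lpr by simp
  finally show ?thesis .
qed

lemma th_hom: "th \<in> hom (lcs_free_factor G i) (lcs_free_factor G i)"
  by (rule homI) (auto simp: th_carrier th_mult)

lemma th_pow_carrier: "D \<in> carrier (lcs_free_factor G i) \<Longrightarrow> (th ^^ k) D \<in> carrier (lcs_free_factor G i)"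
  by (induction k) (auto simp: th_carrier)

lemma th_cF: assumes D: "D \<in> carrier (lcs_free_factor G i)" and E: "E \<in> carrier (lcs_free_factor G 0)"
  shows "th (cF i D E) = cF i (th D) (th E)"
proof -
  obtain u v where uv: "u \<in> lcs G i" "D = lpr G i u" "v \<in> lcs G 0" "E = lpr G 0 v" using F_rep assms by metis
  have vc: "v \<in> carrier G" using uv by simp
  have uc: "u \<in> carrier G" using uv lcs_carrier by blast
  have "th (cF i D E) = th (lpr G (Suc i) (gcomm G u v))" using uv cF_lpr vc by (simp add: cpair_def)
  also have "\<dots> = lpr G (Suc i) (gcomm G (h u) (h v))"
    using th_lpr[OF gcomm_in_lcs[OF uv(1) vc]] gcomm_hom[OF h uc vc] by simp
  also have "\<dots> = cF i (th D) (th E)"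
    using uv th_lpr cF_lpr lcs_hom[OF h] hom_in_carrier[OF h] vc by (simp add: cpair_def)
  finally show ?thesis .
qed

lemma th_pow_cF: assumes D: "D \<in> carrier (lcs_free_factor G i)" and E: "E \<in> carrier (lcs_free_factor G 0)"
  shows "(th ^^ k) (cF i D E) = cF i ((th ^^ k) D) ((th ^^ k) E)"
  by (induction k) (auto simp: th_cF th_pow_carrier D E)

end

definition gspan :: "('c, 'd) monoid_scheme \<Rightarrow> 'c set \<Rightarrow> real \<Rightarrow> 'c set" where
  "gspan F X R = {finprod F (\<lambda>x. x [^]\<^bsub>F\<^esub> a x) X | a. \<forall>x\<in>X. real_of_int \<bar>a x\<bar> \<le> R}"

context comm_group begin

lemma finprod_int_pow: assumes "f \<in> A \<rightarrow> carrier G"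
  shows "finprod G f A [^] (c::int) = finprod G (\<lambda>x. f x [^] c) A"
  using assms
proof (induction A rule: infinite_finite_induct)
  case (infinite A) then show ?case by simp
next
  case empty then show ?case by simp
next
  case (insert x A)
  then have fx: "f x \<in> carrier G" and fA: "f \<in> A \<rightarrow> carrier G" by auto
  have "finprod G f (insert x A) [^] c = (f x \<otimes> finprod G f A) [^] c" using insert fx fA by simp
  also have "\<dots> = f x [^] c \<otimes> finprod G f A [^] c" using fx fA by (simp add: int_pow_distrib)
  also have "\<dots> = finprod G (\<lambda>x. f x [^] c) (insert x A)" using insert fx fA by (simp add: Pi_def)
  finally show ?case .
qed

lemma finprod_inv: assumes "f \<in> A \<rightarrow> carrier G"
  shows "inv (finprod G f A) = finprod G (\<lambda>x. inv (f x)) A"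
proof -
  have "inv (finprod G f A) = finprod G f A [^] (-1::int)" using assms by (simp add: int_pow_neg)
  also have "\<dots> = finprod G (\<lambda>x. f x [^] (-1::int)) A" by (rule finprod_int_pow[OF assms])
  also have "\<dots> = finprod G (\<lambda>x. inv (f x)) A"
    by (rule finprod_cong') (use assms in \<open>auto simp: int_pow_neg Pi_def\<close>)
  finally show ?thesis .
qed

lemma gspan_carrier: "X \<subseteq> carrier G \<Longrightarrow> y \<in> gspan G X R \<Longrightarrow> y \<in> carrier G"
  by (auto simp: gspan_def Pi_def subset_iff)

lemma gspan_one: "R \<ge> 0 \<Longrightarrow> \<one> \<in> gspan G X R"
  unfolding gspan_def by (rule CollectI, rule exI[of _ "\<lambda>_. 0"]) (simp add: finprod_one_eqI)

lemma gspan_mono: assumes Y: "finite Y" "Y \<subseteq> carrier G" and XY: "X \<subseteq> Y" and R: "R \<le> R'" and R0: "0 \<le> R'"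
  shows "gspan G X R \<subseteq> gspan G Y R'"
proof
  fix y assume "y \<in> gspan G X R"
  then obtain a where a: "y = finprod G (\<lambda>x. x [^] a x) X" "\<forall>x\<in>X. real_of_int \<bar>a x\<bar> \<le> R"
    by (auto simp: gspan_def)
  define a' where "a' x = (if x \<in> X then a x else 0)" for x
  have "y = finprod G (\<lambda>x. x [^] a' x) Y"
    unfolding a(1) by (rule finprod_mono_neutral_cong_left) (use Y XY in \<open>auto simp: a'_def Pi_def\<close>)
  moreover have "\<forall>x\<in>Y. real_of_int \<bar>a' x\<bar> \<le> R'" using a(2) R R0 by (auto simp: a'_def)
  ultimately show "y \<in> gspan G Y R'" by (auto simp: gspan_def)
qed

lemma gspan_mult: assumes X: "X \<subseteq> carrier G" and y: "y \<in> gspan G X R" and z: "z \<in> gspan G X R'"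
  shows "y \<otimes> z \<in> gspan G X (R + R')"
proof -
  obtain a where a: "y = finprod G (\<lambda>x. x [^] a x) X" "\<forall>x\<in>X. real_of_int \<bar>a x\<bar> \<le> R"
    using y by (auto simp: gspan_def)
  obtain b where b: "z = finprod G (\<lambda>x. x [^] b x) X" "\<forall>x\<in>X. real_of_int \<bar>b x\<bar> \<le> R'"
    using z by (auto simp: gspan_def)
  have "y \<otimes> z = finprod G (\<lambda>x. x [^] a x \<otimes> x [^] b x) X"
    unfolding a(1) b(1) using X by (subst finprod_multf) (auto simp: Pi_def)
  also have "\<dots> = finprod G (\<lambda>x. x [^] (a x + b x)) X"
    by (rule finprod_cong') (use X in \<open>auto simp: Pi_def int_pow_mult\<close>)
  moreover have "\<forall>x\<in>X. real_of_int \<bar>a x + b x\<bar> \<le> R + R'"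
  proof
    fix x assume x: "x \<in> X"
    have "real_of_int \<bar>a x + b x\<bar> \<le> real_of_int \<bar>a x\<bar> + real_of_int \<bar>b x\<bar>" by simp
    then show "real_of_int \<bar>a x + b x\<bar> \<le> R + R'" using a(2) b(2) x by fastforce
  qed
  ultimately show ?thesis unfolding gspan_def
    by (intro CollectI exI[of _ "\<lambda>x. a x + b x"]) auto
qed

lemma gspan_inv: assumes X: "X \<subseteq> carrier G" and y: "y \<in> gspan G X R"
  shows "inv y \<in> gspan G X R"
proof -
  obtain a where a: "y = finprod G (\<lambda>x. x [^] a x) X" "\<forall>x\<in>X. real_of_int \<bar>a x\<bar> \<le> R"
    using y by (auto simp: gspan_def)
  have "inv y = finprod G (\<lambda>x. inv (x [^] a x)) X" unfolding a(1) using X by (subst finprod_inv) (auto simp: Pi_def)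
  also have "\<dots> = finprod G (\<lambda>x. x [^] (- a x)) X"
    by (rule finprod_cong') (use X in \<open>auto simp: Pi_def int_pow_neg\<close>)
  finally show ?thesis using a(2) unfolding gspan_def
    by (intro CollectI exI[of _ "\<lambda>x. - a x"]) auto
qed

lemma gspan_single: assumes X: "finite X" "X \<subseteq> carrier G" and x: "x \<in> X"
  shows "x [^] (c::int) \<in> gspan G X \<bar>c\<bar>"
proof -
  define a where "a y = (if y = x then c else 0)" for y
  have "finprod G (\<lambda>y. y [^] a y) X = finprod G (\<lambda>y. if y = x then y [^] c else \<one>) X"
    by (rule finprod_cong') (use X in \<open>auto simp: a_def Pi_def\<close>)
  also have "\<dots> = x [^] c" using finprod_singleton_swap[OF x X(1), of "\<lambda>y. y [^] c"] X by (auto simp: Pi_def)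
  finally show ?thesis unfolding gspan_def
    by (intro CollectI exI[of _ a]) (auto simp: a_def)
qed

lemma gspan_finprod: assumes X: "X \<subseteq> carrier G" and I: "finite I" and R: "R \<ge> 0"
  and f: "\<And>i. i \<in> I \<Longrightarrow> f i \<in> gspan G X R"
  shows "finprod G f I \<in> gspan G X (real (card I) * R)"
  using I f
proof (induction I rule: finite_induct)
  case empty then show ?case using gspan_one R by simp
next
  case (insert i I)
  have fc: "f \<in> I \<rightarrow> carrier G" "f i \<in> carrier G" using insert gspan_carrier[OF X] by auto
  have "finprod G f (insert i I) = f i \<otimes> finprod G f I" using insert fc by simp
  also have "\<dots> \<in> gspan G X (R + real (card I) * R)"
    by (rule gspan_mult[OF X]) (use insert in auto)
  finally show ?case using insert by (simp add: algebra_simps)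
qed

end

lemma hom_finprod_comm: assumes F: "comm_group F" and H: "comm_group H" and h: "h \<in> hom F H"
  and f: "f \<in> A \<rightarrow> carrier F"
  shows "h (finprod F f A) = finprod H (\<lambda>x. h (f x)) A"
proof -
  interpret F: comm_group F by (rule F)
  interpret H: comm_group H by (rule H)
  have h1: "h \<one>\<^bsub>F\<^esub> = \<one>\<^bsub>H\<^esub>" using h F.is_group H.is_group
    by (simp add: group_hom.hom_one group_hom_def group_hom_axioms_def)
  show ?thesis
  using f
proof (induction A rule: infinite_finite_induct)
  case (infinite A) then show ?case using h1 by simp
next
  case empty then show ?case using h1 by simp
next
  case (insert x A)
  have fx: "f x \<in> carrier F" and fA: "f \<in> A \<rightarrow> carrier F" using insert by auto
  have "h (finprod F f (insert x A)) = h (f x \<otimes>\<^bsub>F\<^esub> finprod F f A)" using insert fx fA by simp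
  also have "\<dots> = h (f x) \<otimes>\<^bsub>H\<^esub> h (finprod F f A)" using h fx fA by (simp add: hom_mult)
  also have "\<dots> = finprod H (\<lambda>x. h (f x)) (insert x A)"
    using insert fx fA h by (simp add: Pi_def hom_in_carrier)
  finally show ?case .
qed
qed


context autpair begin

definition grows :: "nat \<Rightarrow> 'a set set \<Rightarrow> bool" where
  "grows i D \<longleftrightarrow> (\<exists>X C d. finite X \<and> X \<subseteq> carrier (lcs_free_factor G i) \<and> C \<ge> 0 \<and>
     (\<forall>k. (th ^^ k) D \<in> gspan (lcs_free_factor G i) X (C * real (Suc k) ^ d)))"

lemma th_pow_mult: assumes "D \<in> carrier (lcs_free_factor G i)" "D' \<in> carrier (lcs_free_factor G i)"
  shows "(th ^^ k) (D \<otimes>\<^bsub>lcs_free_factor G i\<^esub> D') = (th ^^ k) D \<otimes>\<^bsub>lcs_free_factor G i\<^esub> (th ^^ k) D'"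
proof (induction k)
  case 0 then show ?case by simp
next
  case (Suc k)
  then show ?case using th_mult[OF th_pow_carrier[OF assms(1)] th_pow_carrier[OF assms(2)], of k k] by simp
qed

lemma th_pow_hom: "(th ^^ k) \<in> hom (lcs_free_factor G i) (lcs_free_factor G i)"
  by (rule homI) (simp_all add: th_pow_carrier th_pow_mult)

lemma th_pow_inv: "D \<in> carrier (lcs_free_factor G i) \<Longrightarrow>
   (th ^^ k) (inv\<^bsub>lcs_free_factor G i\<^esub> D) = inv\<^bsub>lcs_free_factor G i\<^esub> (th ^^ k) D"
  using group_hom.hom_inv[of "lcs_free_factor G i" "lcs_free_factor G i" "th ^^ k" D] th_pow_hom F_group
  by (simp add: group_hom_def group_hom_axioms_def)

lemma th_pow_one: "(th ^^ k) \<one>\<^bsub>lcs_free_factor G i\<^esub> = \<one>\<^bsub>lcs_free_factor G i\<^esub>"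
  using group_hom.hom_one[of "lcs_free_factor G i" "lcs_free_factor G i" "th ^^ k"] th_pow_hom F_group
  by (simp add: group_hom_def group_hom_axioms_def)

lemma pow_le_pow_add: "C \<ge> 0 \<Longrightarrow> C * real (Suc k) ^ d \<le> C * real (Suc k) ^ (d + d')"
  by (intro mult_left_mono power_increasing) auto

lemma grows_one: "grows i \<one>\<^bsub>lcs_free_factor G i\<^esub>"
  unfolding grows_def th_pow_one
  by (intro exI[of _ "{}"] exI[of _ "0::real"] exI[of _ "0::nat"]) (simp add: comm_group.gspan_one[OF F_comm])

lemma grows_mult: assumes D: "D \<in> carrier (lcs_free_factor G i)" and D': "D' \<in> carrier (lcs_free_factor G i)"
  and g: "grows i D" and g': "grows i D'"
  shows "grows i (D \<otimes>\<^bsub>lcs_free_factor G i\<^esub> D')"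
proof -
  interpret F: comm_group "lcs_free_factor G i" by (rule F_comm)
  obtain X C d where X: "finite X" "X \<subseteq> carrier (lcs_free_factor G i)" "C \<ge> 0"
    "\<And>k. (th ^^ k) D \<in> gspan (lcs_free_factor G i) X (C * real (Suc k) ^ d)"
    using g unfolding grows_def by blast
  obtain X' C' d' where X': "finite X'" "X' \<subseteq> carrier (lcs_free_factor G i)" "C' \<ge> 0"
    "\<And>k. (th ^^ k) D' \<in> gspan (lcs_free_factor G i) X' (C' * real (Suc k) ^ d')"
    using g' unfolding grows_def by blast
  have "(th ^^ k) (D \<otimes>\<^bsub>lcs_free_factor G i\<^esub> D') \<in> gspan (lcs_free_factor G i) (X \<union> X') ((C + C') * real (Suc k) ^ (d + d'))" for k
  proof -
    have XX: "finite (X \<union> X')" "X \<union> X' \<subseteq> carrier (lcs_free_factor G i)" using X X' by auto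
    have 1: "(th ^^ k) D \<in> gspan (lcs_free_factor G i) (X \<union> X') (C * real (Suc k) ^ (d + d'))"
      using F.gspan_mono[OF XX, of X "C * real (Suc k) ^ d" "C * real (Suc k) ^ (d + d')"] X(3,4)
        pow_le_pow_add[OF X(3)] by auto
    have 2: "(th ^^ k) D' \<in> gspan (lcs_free_factor G i) (X \<union> X') (C' * real (Suc k) ^ (d + d'))"
      using F.gspan_mono[OF XX, of X' "C' * real (Suc k) ^ d'" "C' * real (Suc k) ^ (d + d')"] X'(3,4)
        pow_le_pow_add[OF X'(3), of k d' d] by (auto simp: add.commute)
    show ?thesis using F.gspan_mult[OF XX(2) 1 2] th_pow_mult[OF D D'] by (simp add: algebra_simps)
  qed
  then show ?thesis unfolding grows_def using X X'
    by (intro exI[of _ "X \<union> X'"] exI[of _ "C + C'"] exI[of _ "d + d'"]) auto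
qed

lemma grows_inv: assumes D: "D \<in> carrier (lcs_free_factor G i)" and g: "grows i D"
  shows "grows i (inv\<^bsub>lcs_free_factor G i\<^esub> D)"
proof -
  interpret F: comm_group "lcs_free_factor G i" by (rule F_comm)
  obtain X C d where X: "finite X" "X \<subseteq> carrier (lcs_free_factor G i)" "C \<ge> 0"
    "\<And>k. (th ^^ k) D \<in> gspan (lcs_free_factor G i) X (C * real (Suc k) ^ d)"
    using g unfolding grows_def by blast
  show ?thesis unfolding grows_def using X F.gspan_inv[OF X(2) X(4)] th_pow_inv[OF D]
    by (intro exI[of _ X] exI[of _ C] exI[of _ d]) auto
qed

lemma cF_finprod1: assumes f: "f \<in> A \<rightarrow> carrier (lcs_free_factor G i)" and E: "E \<in> carrier (lcs_free_factor G 0)"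
  shows "cF i (finprod (lcs_free_factor G i) f A) E = finprod (lcs_free_factor G (Suc i)) (\<lambda>x. cF i (f x) E) A"
  by (rule hom_finprod_comm[OF F_comm F_comm cF_hom1[OF E] f])

lemma cF_finprod2: assumes f: "f \<in> A \<rightarrow> carrier (lcs_free_factor G 0)" and D: "D \<in> carrier (lcs_free_factor G i)"
  shows "cF i D (finprod (lcs_free_factor G 0) f A) = finprod (lcs_free_factor G (Suc i)) (\<lambda>x. cF i D (f x)) A"
  by (rule hom_finprod_comm[OF F_comm F_comm cF_hom2[OF D] f])

lemma growsE: assumes "grows i D"
  obtains X C d where "finite X" "X \<subseteq> carrier (lcs_free_factor G i)" "C \<ge> 0"
    "\<And>k. (th ^^ k) D \<in> gspan (lcs_free_factor G i) X (C * real (Suc k) ^ d)"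
proof -
  from assms obtain X C d where *: "finite X \<and> X \<subseteq> carrier (lcs_free_factor G i) \<and> C \<ge> 0 \<and>
    (\<forall>k. (th ^^ k) D \<in> gspan (lcs_free_factor G i) X (C * real (Suc k) ^ d))"
    unfolding grows_def by blast
  show thesis by (rule that[of X C d]) (use * in auto)
qed

lemma grows_cF: assumes D: "D \<in> carrier (lcs_free_factor G i)" and E: "E \<in> carrier (lcs_free_factor G 0)"
  and g: "grows i D" and g': "grows 0 E"
  shows "grows (Suc i) (cF i D E)"
proof -
  let ?F = "lcs_free_factor G i" and ?Fz = "lcs_free_factor G 0" and ?Fs = "lcs_free_factor G (Suc i)"
  interpret F: comm_group ?F by (rule F_comm)
  interpret F0: comm_group ?Fz by (rule F_comm)
  interpret F1: comm_group ?Fs by (rule F_comm)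
  obtain X C d where X: "finite X" "X \<subseteq> carrier ?F" "C \<ge> 0"
    "\<And>k. (th ^^ k) D \<in> gspan ?F X (C * real (Suc k) ^ d)"
    using growsE[OF g] by metis
  obtain Z C' d' where Z: "finite Z" "Z \<subseteq> carrier ?Fz" "C' \<ge> 0"
    "\<And>k. (th ^^ k) E \<in> gspan ?Fz Z (C' * real (Suc k) ^ d')"
    using growsE[OF g'] by metis
  define Y where "Y = (\<lambda>(x, z). cF i x z) ` (X \<times> Z)"
  have Xc: "x \<in> carrier ?F" if "x \<in> X" for x using X(2) that by blast
  have Zc: "z \<in> carrier ?Fz" if "z \<in> Z" for z using Z(2) that by blast
  have cxz: "cF i x z \<in> carrier ?Fs" if "x \<in> X" "z \<in> Z" for x z using cF_carrier[OF Xc Zc] that .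
  have Y: "finite Y" "Y \<subseteq> carrier ?Fs" unfolding Y_def using X(1) Z(1) cxz by (simp, fast)
  define B where "B k = real (card X) * (real (card Z) * ((C * C') * real (Suc k) ^ (d + d')))" for k
  have main: "(th ^^ k) (cF i D E) \<in> gspan ?Fs Y (B k)" for k
  proof -
    let ?R = "C * real (Suc k) ^ d" and ?R' = "C' * real (Suc k) ^ d'"
    have "(th ^^ k) D \<in> gspan ?F X ?R" by (rule X(4))
    then obtain a where a: "(th ^^ k) D = finprod ?F (\<lambda>x. x [^]\<^bsub>?F\<^esub> a x) X" "\<forall>x\<in>X. real_of_int \<bar>a x\<bar> \<le> ?R"
      unfolding gspan_def by blast
    have "(th ^^ k) E \<in> gspan ?Fz Z ?R'" by (rule Z(4))
    then obtain b where b: "(th ^^ k) E = finprod ?Fz (\<lambda>z. z [^]\<^bsub>?Fz\<^esub> b z) Z" "\<forall>z\<in>Z. real_of_int \<bar>b z\<bar> \<le> ?R'"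
      unfolding gspan_def by blast
    have R0: "0 \<le> (C * C') * real (Suc k) ^ (d + d')" using X(3) Z(3) by simp
    have trm: "cF i x z [^]\<^bsub>?Fs\<^esub> (b z * a x) \<in> gspan ?Fs Y ((C * C') * real (Suc k) ^ (d + d'))"
      if x: "x \<in> X" and z: "z \<in> Z" for x z
    proof -
      have xz: "cF i x z \<in> Y" using x z unfolding Y_def by force
      have "real_of_int \<bar>b z * a x\<bar> = real_of_int \<bar>a x\<bar> * real_of_int \<bar>b z\<bar>" by (simp add: abs_mult)
      also have "\<dots> \<le> ?R * ?R'" using a(2) b(2) x z by (intro mult_mono) auto
      also have "\<dots> = (C * C') * real (Suc k) ^ (d + d')" by (simp add: power_add)
      finally have le: "real_of_int \<bar>b z * a x\<bar> \<le> (C * C') * real (Suc k) ^ (d + d')" .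
      have "cF i x z [^]\<^bsub>?Fs\<^esub> (b z * a x) \<in> gspan ?Fs Y (real_of_int \<bar>b z * a x\<bar>)"
        using F1.gspan_single[OF Y xz, of "b z * a x"] by simp
      then show ?thesis using F1.gspan_mono[OF Y order_refl le R0] by blast
    qed
    have Ec: "finprod ?Fz (\<lambda>z. z [^]\<^bsub>?Fz\<^esub> b z) Z \<in> carrier ?Fz"
      by (rule F0.finprod_closed) (auto simp: Pi_def Zc)
    have fX: "(\<lambda>x. x [^]\<^bsub>?F\<^esub> a x) \<in> X \<rightarrow> carrier ?F" by (auto simp: Pi_def Xc)
    have inner: "cF i (x [^]\<^bsub>?F\<^esub> a x) (finprod ?Fz (\<lambda>z. z [^]\<^bsub>?Fz\<^esub> b z) Z)
          = finprod ?Fs (\<lambda>z. cF i x z [^]\<^bsub>?Fs\<^esub> (b z * a x)) Z" if x: "x \<in> X" for x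
    proof -
      have "cF i (x [^]\<^bsub>?F\<^esub> a x) (finprod ?Fz (\<lambda>z. z [^]\<^bsub>?Fz\<^esub> b z) Z)
            = cF i x (finprod ?Fz (\<lambda>z. z [^]\<^bsub>?Fz\<^esub> b z) Z) [^]\<^bsub>?Fs\<^esub> a x"
        by (rule cF_pow1[OF Xc[OF x] Ec])
      also have "cF i x (finprod ?Fz (\<lambda>z. z [^]\<^bsub>?Fz\<^esub> b z) Z) = finprod ?Fs (\<lambda>z. cF i x (z [^]\<^bsub>?Fz\<^esub> b z)) Z"
        by (rule cF_finprod2) (auto simp: Pi_def Zc Xc[OF x])
      also have "\<dots> = finprod ?Fs (\<lambda>z. cF i x z [^]\<^bsub>?Fs\<^esub> b z) Z"
      proof (rule F1.finprod_cong'[OF refl])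
        show "(\<lambda>z. cF i x z [^]\<^bsub>?Fs\<^esub> b z) \<in> Z \<rightarrow> carrier ?Fs" using cxz[OF x] by (auto simp: Pi_def)
        fix z assume z: "z \<in> Z"
        show "cF i x (z [^]\<^bsub>?Fz\<^esub> b z) = cF i x z [^]\<^bsub>?Fs\<^esub> b z" by (rule cF_pow2[OF Xc[OF x] Zc[OF z]])
      qed
      also have "\<dots> [^]\<^bsub>?Fs\<^esub> a x = finprod ?Fs (\<lambda>z. (cF i x z [^]\<^bsub>?Fs\<^esub> b z) [^]\<^bsub>?Fs\<^esub> a x) Z"
        by (rule F1.finprod_int_pow) (use cxz[OF x] in \<open>auto simp: Pi_def\<close>)
      also have "\<dots> = finprod ?Fs (\<lambda>z. cF i x z [^]\<^bsub>?Fs\<^esub> (b z * a x)) Z"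
      proof (rule F1.finprod_cong'[OF refl])
        show "(\<lambda>z. cF i x z [^]\<^bsub>?Fs\<^esub> (b z * a x)) \<in> Z \<rightarrow> carrier ?Fs" using cxz[OF x] by (auto simp: Pi_def)
        fix z assume z: "z \<in> Z"
        show "(cF i x z [^]\<^bsub>?Fs\<^esub> b z) [^]\<^bsub>?Fs\<^esub> a x = cF i x z [^]\<^bsub>?Fs\<^esub> (b z * a x)"
          by (rule F1.int_pow_pow[OF cxz[OF x z]])
      qed
      finally show ?thesis .
    qed
    have "(th ^^ k) (cF i D E) = cF i (finprod ?F (\<lambda>x. x [^]\<^bsub>?F\<^esub> a x) X) (finprod ?Fz (\<lambda>z. z [^]\<^bsub>?Fz\<^esub> b z) Z)"
      using th_pow_cF[OF D E, of k] a(1) b(1) by simp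
    also have "\<dots> = finprod ?Fs (\<lambda>x. cF i (x [^]\<^bsub>?F\<^esub> a x) (finprod ?Fz (\<lambda>z. z [^]\<^bsub>?Fz\<^esub> b z) Z)) X"
      by (rule cF_finprod1[OF fX Ec])
    also have "\<dots> = finprod ?Fs (\<lambda>x. finprod ?Fs (\<lambda>z. cF i x z [^]\<^bsub>?Fs\<^esub> (b z * a x)) Z) X"
    proof (rule F1.finprod_cong'[OF refl])
      show "(\<lambda>x. finprod ?Fs (\<lambda>z. cF i x z [^]\<^bsub>?Fs\<^esub> (b z * a x)) Z) \<in> X \<rightarrow> carrier ?Fs"
        using cxz by (auto simp: Pi_def)
    qed (rule inner)
    also have "\<dots> \<in> gspan ?Fs Y (B k)" unfolding B_def
    proof (rule F1.gspan_finprod[OF Y(2) X(1)])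
      show "0 \<le> real (card Z) * (C * C' * real (Suc k) ^ (d + d'))" using R0 by simp
      fix x assume x: "x \<in> X"
      show "finprod ?Fs (\<lambda>z. cF i x z [^]\<^bsub>?Fs\<^esub> (b z * a x)) Z \<in> gspan ?Fs Y (real (card Z) * (C * C' * real (Suc k) ^ (d + d')))"
        by (rule F1.gspan_finprod[OF Y(2) Z(1) R0]) (rule trm[OF x])
    qed
    finally show ?thesis .
  qed
  have eqB: "B k = (real (card X) * (real (card Z) * (C * C'))) * real (Suc k) ^ (d + d')" for k
    unfolding B_def by (simp add: algebra_simps)
  have C0: "0 \<le> real (card X) * (real (card Z) * (C * C'))" using X(3) Z(3) by simp
  show ?thesis unfolding grows_def
  proof (intro exI conjI allI)
    fix k show "(th ^^ k) (cF i D E) \<in> gspan ?Fs Y ((real (card X) * (real (card Z) * (C * C'))) * real (Suc k) ^ (d + d'))"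
      using main[of k] unfolding eqB .
  qed (use Y C0 in auto)
qed

lemma grows_all: assumes base: "\<And>E. E \<in> carrier (lcs_free_factor G 0) \<Longrightarrow> grows 0 E"
  shows "D \<in> carrier (lcs_free_factor G i) \<Longrightarrow> grows i D"
proof (induction i arbitrary: D)
  case 0 then show ?case by (rule base)
next
  case (Suc i)
  let ?S = "{gcomm G x y | x y. x \<in> lcs G i \<and> y \<in> carrier G}"
  have Sc: "?S \<subseteq> lcs G (Suc i)" using gcomm_in_lcs by blast
  have Sc': "?S \<subseteq> carrier G" using Sc lcs_carrier by blast
  obtain x where x: "x \<in> lcs G (Suc i)" "D = lpr G (Suc i) x" using F_rep[OF Suc.prems] by blast
  have "x \<in> generate G ?S" using x(1) by (simp add: lcs_Suc')
  then have "x \<in> lcs G (Suc i) \<and> grows (Suc i) (lpr G (Suc i) x)"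
  proof (induction x rule: generate.induct)
    case one then show ?case using grows_one lpr_one subgroup.one_closed[OF lcs_subgroup] by simp
  next
    case (incl g)
    then obtain u v where uv: "g = gcomm G u v" "u \<in> lcs G i" "v \<in> carrier G" by blast
    have "lpr G (Suc i) g = cF i (lpr G i u) (lpr G 0 v)" using uv cF_lpr by (simp add: cpair_def)
    moreover have "grows (Suc i) (cF i (lpr G i u) (lpr G 0 v))"
      using grows_cF[OF lpr_carrier[OF uv(2)] lpr_carrier[of v 0]] Suc.IH[OF lpr_carrier[OF uv(2)]]
        base[OF lpr_carrier[of v 0]] uv(3) by simp
    ultimately show ?case using incl Sc by auto
  next
    case (inv g)
    have g: "g \<in> lcs G (Suc i)" using inv Sc by blast
    have "grows (Suc i) (lpr G (Suc i) g)"
    proof -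
      obtain u v where uv: "g = gcomm G u v" "u \<in> lcs G i" "v \<in> carrier G" using inv by blast
      have "lpr G (Suc i) g = cF i (lpr G i u) (lpr G 0 v)" using uv cF_lpr by (simp add: cpair_def)
      moreover have "grows (Suc i) (cF i (lpr G i u) (lpr G 0 v))"
        using grows_cF[OF lpr_carrier[OF uv(2)] lpr_carrier[of v 0]] Suc.IH[OF lpr_carrier[OF uv(2)]]
          base[OF lpr_carrier[of v 0]] uv(3) by simp
      ultimately show ?thesis by simp
    qed
    then show ?case using grows_inv[OF lpr_carrier[OF g]] lpr_inv[OF g]
      subgroup.m_inv_closed[OF lcs_subgroup g] by simp
  next
    case (eng a b)
    have "a \<otimes> b \<in> lcs G (Suc i)" using eng.IH subgroup.m_closed[OF lcs_subgroup] by blast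
    then show ?case using eng.IH grows_mult[OF lpr_carrier lpr_carrier] lpr_mult by simp
  qed
  then show ?case using x by simp
qed

end

context comm_group begin

lemma foldr_zcomb: assumes "distinct xs" "\<And>j. j \<in> set xs \<Longrightarrow> b j \<in> carrier G" "acc \<in> carrier G"
  shows "foldr (\<lambda>j acc. (b j [^] a j) \<otimes> acc) xs acc = finprod G (\<lambda>j. b j [^] (a j :: int)) (set xs) \<otimes> acc"
  using assms
proof (induction xs)
  case Nil then show ?case by simp
next
  case (Cons x xs)
  have bx: "b x [^] a x \<in> carrier G" using Cons by simp
  have fc: "(\<lambda>j. b j [^] a j) \<in> set xs \<rightarrow> carrier G" using Cons by (auto simp: Pi_def)
  have "foldr (\<lambda>j acc. (b j [^] a j) \<otimes> acc) (x # xs) acc = b x [^] a x \<otimes> (finprod G (\<lambda>j. b j [^] a j) (set xs) \<otimes> acc)"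
    using Cons by simp
  also have "\<dots> = finprod G (\<lambda>j. b j [^] a j) (set (x # xs)) \<otimes> acc"
    using Cons bx fc by (simp add: m_assoc)
  finally show ?case .
qed

lemma zcomb_eq: assumes "\<And>j. j < m \<Longrightarrow> b j \<in> carrier G"
  shows "zcomb G b a m = finprod G (\<lambda>j. b j [^] a j) {..<m}"
proof -
  have "zcomb G b a m = finprod G (\<lambda>j. b j [^] a j) (set [0..<m]) \<otimes> \<one>"
    unfolding zcomb_def by (rule foldr_zcomb) (use assms in auto)
  also have "\<dots> = finprod G (\<lambda>j. b j [^] a j) {..<m}" using assms by (simp add: atLeast0LessThan Pi_def)
  finally show ?thesis .
qed

lemma zcomb_eqA: "\<forall>j<m. b j \<in> carrier G \<Longrightarrow> zcomb G b a m = finprod G (\<lambda>j. b j [^] a j) {..<m}"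
  by (rule zcomb_eq) auto

lemma zcomb_closed: "(\<And>j. j < m \<Longrightarrow> b j \<in> carrier G) \<Longrightarrow> zcomb G b a m \<in> carrier G"
  by (simp add: zcomb_eq Pi_def)

lemma zcomb_cong: "(\<And>j. j < m \<Longrightarrow> a j = a' j) \<Longrightarrow> zcomb G b a m = zcomb G b a' m"
  unfolding zcomb_def by (intro List.foldr_cong) auto

lemma zcomb_add: assumes "\<And>j. j < m \<Longrightarrow> b j \<in> carrier G"
  shows "zcomb G b (\<lambda>j. a j + a' j) m = zcomb G b a m \<otimes> zcomb G b a' m"
proof -
  have bcA: "\<forall>j<m. b j \<in> carrier G" using assms by blast
  have "zcomb G b (\<lambda>j. a j + a' j) m = finprod G (\<lambda>j. b j [^] a j \<otimes> b j [^] a' j) {..<m}"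
    unfolding zcomb_eqA[OF bcA] by (rule finprod_cong') (use assms in \<open>auto simp: Pi_def int_pow_mult\<close>)
  also have "\<dots> = zcomb G b a m \<otimes> zcomb G b a' m"
    unfolding zcomb_eqA[OF bcA] by (rule finprod_multf) (use assms in \<open>auto simp: Pi_def\<close>)
  finally show ?thesis .
qed

lemma zcomb_smul: assumes "\<And>j. j < m \<Longrightarrow> b j \<in> carrier G"
  shows "zcomb G b (\<lambda>j. c * a j) m = zcomb G b a m [^] c"
proof -
  have bcA: "\<forall>j<m. b j \<in> carrier G" using assms by blast
  have "zcomb G b a m [^] c = finprod G (\<lambda>j. (b j [^] a j) [^] c) {..<m}"
    unfolding zcomb_eqA[OF bcA] by (rule finprod_int_pow) (use assms in \<open>auto simp: Pi_def\<close>)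
  also have "\<dots> = zcomb G b (\<lambda>j. c * a j) m"
    unfolding zcomb_eqA[OF bcA] by (rule finprod_cong') (use assms in \<open>auto simp: Pi_def int_pow_pow mult.commute\<close>)
  finally show ?thesis by simp
qed

lemma zcomb_zero: "(\<And>j. j < m \<Longrightarrow> b j \<in> carrier G) \<Longrightarrow> zcomb G b (\<lambda>_. 0) m = \<one>"
  by (simp add: zcomb_eq finprod_one_eqI)

lemma zcomb_sum: assumes b: "\<And>j. j < m \<Longrightarrow> b j \<in> carrier G" and X: "finite X"
  shows "zcomb G b (\<lambda>j. \<Sum>x\<in>X. f x j) m = finprod G (\<lambda>x. zcomb G b (f x) m) X"
  using X
proof (induction X rule: finite_induct)
  case empty then show ?case using zcomb_zero[OF b] by simp
next
  case (insert x X)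
  have "zcomb G b (\<lambda>j. \<Sum>y\<in>insert x X. f y j) m = zcomb G b (\<lambda>j. f x j + (\<Sum>y\<in>X. f y j)) m"
    using insert by simp
  also have "\<dots> = zcomb G b (f x) m \<otimes> zcomb G b (\<lambda>j. \<Sum>y\<in>X. f y j) m" by (rule zcomb_add[OF b])
  also have "\<dots> = finprod G (\<lambda>x. zcomb G b (f x) m) (insert x X)"
    using insert zcomb_closed[OF b] by (simp add: Pi_def)
  finally show ?case .
qed

lemma zcoords: assumes B: "is_zbasis G m b" and x: "x \<in> carrier G"
  shows "(\<forall>j\<ge>m. zcoords G m b x j = 0) \<and> x = zcomb G b (zcoords G m b x) m"
proof -
  have "\<exists>!a. (\<forall>j\<ge>m. a j = 0) \<and> x = zcomb G b a m" using B x by (simp add: is_zbasis_def)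
  then show ?thesis unfolding zcoords_def by (rule theI')
qed

lemma zcoords_unique: assumes B: "is_zbasis G m b" and a: "\<forall>j\<ge>m. a j = 0"
  shows "zcoords G m b (zcomb G b a m) = a"
proof -
  have bc: "\<And>j. j < m \<Longrightarrow> b j \<in> carrier G" using B by (simp add: is_zbasis_def)
  have "\<exists>!a'. (\<forall>j\<ge>m. a' j = 0) \<and> zcomb G b a m = zcomb G b a' m"
    using B zcomb_closed[OF bc] by (simp add: is_zbasis_def)
  then show ?thesis unfolding zcoords_def by (rule the1_equality) (use a in auto)
qed

lemma zcoords_zcomb: assumes B: "is_zbasis G m b"
  shows "zcoords G m b (zcomb G b a m) = (\<lambda>j. if j < m then a j else 0)"
proof -
  have "zcomb G b a m = zcomb G b (\<lambda>j. if j < m then a j else 0) m" by (rule zcomb_cong) simp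
  then show ?thesis using zcoords_unique[OF B, of "\<lambda>j. if j < m then a j else 0"] by simp
qed

lemma basis_lin: assumes B: "is_zbasis G m b" and f: "f \<in> hom G G"
  shows "f (zcomb G b c m) = zcomb G b (\<lambda>p. \<Sum>j\<in>{..<m}. c j * zcoords G m b (f (b j)) p) m"
proof -
  have bc: "\<And>j. j < m \<Longrightarrow> b j \<in> carrier G" using B by (simp add: is_zbasis_def)
  have bcA: "\<forall>j<m. b j \<in> carrier G" using bc by blast
  have fb: "\<And>j. j < m \<Longrightarrow> f (b j) \<in> carrier G" using f bc by (simp add: hom_in_carrier)
  have "f (zcomb G b c m) = finprod G (\<lambda>j. f (b j [^] c j)) {..<m}"
    unfolding zcomb_eqA[OF bcA] by (rule hom_finprod_comm[OF comm_group_axioms comm_group_axioms f]) (use bc in \<open>auto simp: Pi_def\<close>)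
  also have "\<dots> = finprod G (\<lambda>j. zcomb G b (\<lambda>p. c j * zcoords G m b (f (b j)) p) m) {..<m}"
  proof (rule finprod_cong'[OF refl])
    show "(\<lambda>j. zcomb G b (\<lambda>p. c j * zcoords G m b (f (b j)) p) m) \<in> {..<m} \<rightarrow> carrier G"
      using zcomb_closed[OF bc] by auto
    fix j assume j: "j \<in> {..<m}"
    have "f (b j [^] c j) = f (b j) [^] c j" using hom_int_pow[OF f bc is_group is_group] j by simp
    also have "\<dots> = zcomb G b (zcoords G m b (f (b j))) m [^] c j" using zcoords[OF B fb] j by simp
    also have "\<dots> = zcomb G b (\<lambda>p. c j * zcoords G m b (f (b j)) p) m" by (rule zcomb_smul[OF bc, symmetric])
    finally show "f (b j [^] c j) = zcomb G b (\<lambda>p. c j * zcoords G m b (f (b j)) p) m" .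
  qed
  also have "\<dots> = zcomb G b (\<lambda>p. \<Sum>j\<in>{..<m}. c j * zcoords G m b (f (b j)) p) m"
    by (rule zcomb_sum[symmetric]) (simp_all add: bc)
  finally show ?thesis .
qed

lemma basis_matrix_entry: "p < m \<Longrightarrow> j < m \<Longrightarrow> basis_matrix G m b f $$ (p, j) = zcoords G m b (f (b j)) p"
  by (simp add: basis_matrix_def)

lemma basis_matrix_carrier: "basis_matrix G m b f \<in> carrier_mat m m"
  by (simp add: basis_matrix_def)

lemma basis_matrix_comp: assumes B: "is_zbasis G m b" and f: "f \<in> hom G G" and g: "g \<in> hom G G"
  shows "basis_matrix G m b (\<lambda>x. g (f x)) = basis_matrix G m b g * basis_matrix G m b f"
proof (rule eq_matI)
  have bc: "\<And>j. j < m \<Longrightarrow> b j \<in> carrier G" using B by (simp add: is_zbasis_def)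
  have fb: "\<And>j. j < m \<Longrightarrow> f (b j) \<in> carrier G" using f bc by (simp add: hom_in_carrier)
  fix p j assume p: "p < dim_row (basis_matrix G m b g * basis_matrix G m b f)"
    and j: "j < dim_col (basis_matrix G m b g * basis_matrix G m b f)"
  then have p: "p < m" and j: "j < m" by (auto simp: basis_matrix_def)
  have "g (f (b j)) = g (zcomb G b (zcoords G m b (f (b j))) m)" using zcoords[OF B fb[OF j]] by simp
  also have "\<dots> = zcomb G b (\<lambda>p. \<Sum>l\<in>{..<m}. zcoords G m b (f (b j)) l * zcoords G m b (g (b l)) p) m"
    by (rule basis_lin[OF B g])
  finally have "zcoords G m b (g (f (b j))) p = (\<Sum>l\<in>{..<m}. zcoords G m b (f (b j)) l * zcoords G m b (g (b l)) p)"
    using zcoords_zcomb[OF B] p by simp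
  also have "\<dots> = row (basis_matrix G m b g) p \<bullet> col (basis_matrix G m b f) j"
    unfolding scalar_prod_def using p j
    by (auto simp: basis_matrix_def lessThan_atLeast0 intro!: sum.cong)
  finally show "basis_matrix G m b (\<lambda>x. g (f x)) $$ (p, j) = (basis_matrix G m b g * basis_matrix G m b f) $$ (p, j)"
    using p j by (simp add: basis_matrix_def)
qed (auto simp: basis_matrix_def)

lemma basis_matrix_id: assumes B: "is_zbasis G m b" and f: "\<And>j. j < m \<Longrightarrow> f (b j) = b j"
  shows "basis_matrix G m b f = 1\<^sub>m m"
proof (rule eq_matI)
  have bc: "\<And>j. j < m \<Longrightarrow> b j \<in> carrier G" using B by (simp add: is_zbasis_def)
  have bcA: "\<forall>j<m. b j \<in> carrier G" using bc by blast
  fix p j assume "p < dim_row (1\<^sub>m m :: int mat)" "j < dim_col (1\<^sub>m m :: int mat)"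
  then have p: "p < m" and j: "j < m" by auto
  have "zcomb G b (\<lambda>p. if p = j then 1 else 0) m = finprod G (\<lambda>p. if p = j then b p else \<one>) {..<m}"
    unfolding zcomb_eqA[OF bcA] by (rule finprod_cong') (use bc in \<open>auto simp: Pi_def\<close>)
  also have "\<dots> = b j" using finprod_singleton_swap[of j "{..<m}" b] j bc by (auto simp: Pi_def)
  finally have "zcoords G m b (b j) = (\<lambda>p. if p < m then (if p = j then 1 else 0) else 0)"
    using zcoords_zcomb[OF B, of "\<lambda>p. if p = j then 1 else 0"] by simp
  then show "basis_matrix G m b f $$ (p, j) = 1\<^sub>m m $$ (p, j)" using p j f[OF j] by (simp add: basis_matrix_def)
qed (auto simp: basis_matrix_def)

lemma funpow_hom: "f \<in> hom G G \<Longrightarrow> (f ^^ k) \<in> hom G G"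
  by (induction k) (auto simp: hom_def Pi_def)

lemma basis_matrix_pow: assumes B: "is_zbasis G m b" and f: "f \<in> hom G G"
  shows "basis_matrix G m b (f ^^ k) = basis_matrix G m b f ^\<^sub>m k"
proof (induction k)
  case 0
  have "basis_matrix G m b (f ^^ 0) = 1\<^sub>m m" by (rule basis_matrix_id[OF B]) simp
  then show ?case by (simp add: basis_matrix_def)
next
  case (Suc k)
  have "f ^^ Suc k = (\<lambda>x. (f ^^ k) (f x))" by (simp only: funpow_Suc_right comp_def)
  then have "basis_matrix G m b (f ^^ Suc k) = basis_matrix G m b (\<lambda>x. (f ^^ k) (f x))"
    by (simp only:)
  also have "\<dots> = basis_matrix G m b (f ^^ k) * basis_matrix G m b f"
    by (rule basis_matrix_comp[OF B f funpow_hom[OF f]])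
  finally have "basis_matrix G m b (f ^^ Suc k) = basis_matrix G m b (f ^^ k) * basis_matrix G m b f" .
  then show ?case using Suc.IH by (metis pow_mat.simps(2))
qed

lemma basis_column: assumes B: "is_zbasis G m b" and f: "f \<in> hom G G" and j: "j < m"
  shows "\<forall>p<m. zcoords G m b ((f ^^ k) (b j)) p = (basis_matrix G m b f ^\<^sub>m k) $$ (p, j)"
proof (intro allI impI)
  fix p assume p: "p < m"
  show "zcoords G m b ((f ^^ k) (b j)) p = (basis_matrix G m b f ^\<^sub>m k) $$ (p, j)"
    using basis_matrix_pow[OF B f, of k] basis_matrix_entry[OF p j, of b "f ^^ k"] by simp
qed

end

context comm_group begin

lemma zcomb_gspan: assumes bc: "\<forall>j<m. b j \<in> carrier G" and a: "\<forall>p<m. real_of_int \<bar>a p\<bar> \<le> R" and R: "R \<ge> 0"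
  shows "zcomb G b a m \<in> gspan G (b ` {..<m}) (real m * R)"
proof -
  have X: "b ` {..<m} \<subseteq> carrier G" "finite (b ` {..<m})" using bc by auto
  have "zcomb G b a m = finprod G (\<lambda>j. b j [^] a j) {..<m}" by (rule zcomb_eqA[OF bc])
  also have "\<dots> \<in> gspan G (b ` {..<m}) (real (card {..<m}) * R)"
  proof (rule gspan_finprod[OF X(1) _ R])
    fix j assume j: "j \<in> {..<m}"
    have "b j [^] a j \<in> gspan G (b ` {..<m}) (real_of_int \<bar>a j\<bar>)"
      using gspan_single[OF X(2) X(1), of "b j" "a j"] j by simp
    also have "\<dots> \<subseteq> gspan G (b ` {..<m}) R"
      by (rule gspan_mono[OF X(2) X(1) order_refl]) (use a j R in auto)
    finally show "b j [^] a j \<in> gspan G (b ` {..<m}) R" .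
  qed simp
  finally show ?thesis by simp
qed

lemma gspan_coords: assumes B: "is_zbasis G m b" and X: "finite X" "X \<subseteq> carrier G"
  and y: "y \<in> gspan G X R" and R: "R \<ge> 0" and p: "p < m"
  shows "real_of_int \<bar>zcoords G m b y p\<bar> \<le> R * (\<Sum>x\<in>X. \<Sum>q<m. real_of_int \<bar>zcoords G m b x q\<bar>)"
proof -
  obtain a where a: "y = finprod G (\<lambda>x. x [^] a x) X" "\<forall>x\<in>X. real_of_int \<bar>a x\<bar> \<le> R"
    using y unfolding gspan_def by blast
  have bc: "\<And>j. j < m \<Longrightarrow> b j \<in> carrier G" using B by (simp add: is_zbasis_def)
  have "y = finprod G (\<lambda>x. zcomb G b (\<lambda>q. a x * zcoords G m b x q) m) X"
    unfolding a(1)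
  proof (rule finprod_cong'[OF refl])
    show "(\<lambda>x. zcomb G b (\<lambda>q. a x * zcoords G m b x q) m) \<in> X \<rightarrow> carrier G"
      using zcomb_closed bc by (auto simp: Pi_def)
    fix x assume x: "x \<in> X"
    have xc: "x \<in> carrier G" using X x by auto
    have "x [^] a x = zcomb G b (zcoords G m b x) m [^] a x" using zcoords[OF B xc] by simp
    also have "\<dots> = zcomb G b (\<lambda>q. a x * zcoords G m b x q) m" by (rule zcomb_smul[symmetric]) (rule bc)
    finally show "x [^] a x = zcomb G b (\<lambda>q. a x * zcoords G m b x q) m" .
  qed
  also have "\<dots> = zcomb G b (\<lambda>q. \<Sum>x\<in>X. a x * zcoords G m b x q) m"
    by (rule zcomb_sum[symmetric]) (simp_all add: bc X)
  finally have "zcoords G m b y p = (\<Sum>x\<in>X. a x * zcoords G m b x p)"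
    using zcoords_zcomb[OF B] p by simp
  then have "real_of_int \<bar>zcoords G m b y p\<bar> = \<bar>\<Sum>x\<in>X. real_of_int (a x) * real_of_int (zcoords G m b x p)\<bar>"
    by simp
  also have "\<dots> \<le> (\<Sum>x\<in>X. \<bar>real_of_int (a x) * real_of_int (zcoords G m b x p)\<bar>)" by (rule sum_abs)
  also have "\<dots> \<le> (\<Sum>x\<in>X. R * (\<Sum>q<m. real_of_int \<bar>zcoords G m b x q\<bar>))"
  proof (rule sum_mono)
    fix x assume x: "x \<in> X"
    have "\<bar>real_of_int (zcoords G m b x p)\<bar> \<le> (\<Sum>q<m. real_of_int \<bar>zcoords G m b x q\<bar>)"
      using member_le_sum[of p "{..<m}" "\<lambda>q. real_of_int \<bar>zcoords G m b x q\<bar>"] p by simp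
    then show "\<bar>real_of_int (a x) * real_of_int (zcoords G m b x p)\<bar> \<le> R * (\<Sum>q<m. real_of_int \<bar>zcoords G m b x q\<bar>)"
      unfolding abs_mult using a(2) x by (intro mult_mono) auto
  qed
  also have "\<dots> = R * (\<Sum>x\<in>X. \<Sum>q<m. real_of_int \<bar>zcoords G m b x q\<bar>)" by (simp add: sum_distrib_left)
  finally show ?thesis .
qed

end

context autpair begin

lemma lcs_matrix_eq: "lcs_matrix G h i m b = basis_matrix (lcs_free_factor G i) m b th"
  by (simp add: lcs_matrix_def)

lemma base_grows: assumes B1: "is_zbasis (lcs_free_factor G 0) m1 b1" and C0: "C0 \<ge> 0"
  and bound: "\<And>k p j. p < m1 \<Longrightarrow> j < m1 \<Longrightarrow>
     real_of_int \<bar>(lcs_matrix G h 0 m1 b1 ^\<^sub>m k) $$ (p, j)\<bar> \<le> C0 * real (Suc k) ^ d0"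
  and E: "E \<in> carrier (lcs_free_factor G 0)"
  shows "grows 0 E"
proof -
  let ?F = "lcs_free_factor G 0"
  interpret F: comm_group ?F by (rule F_comm)
  have bc: "\<forall>j<m1. b1 j \<in> carrier ?F" using B1 by (simp add: is_zbasis_def)
  define c where "c = zcoords ?F m1 b1 E"
  have Ec: "E = zcomb ?F b1 c m1" using F.zcoords[OF B1 E] by (simp add: c_def)
  define S where "S = (\<Sum>j<m1. real_of_int \<bar>c j\<bar>)"
  have S0: "S \<ge> 0" by (simp add: S_def sum_nonneg)
  have main: "(th ^^ k) E \<in> gspan ?F (b1 ` {..<m1}) ((real m1 * S * C0) * real (Suc k) ^ d0)" for k
  proof -
    define a where "a p = (\<Sum>j\<in>{..<m1}. c j * zcoords ?F m1 b1 ((th ^^ k) (b1 j)) p)" for p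
    have "(th ^^ k) E = zcomb ?F b1 a m1" unfolding a_def
      by (subst Ec, rule F.basis_lin[OF B1 th_pow_hom])
    moreover have "\<forall>p<m1. real_of_int \<bar>a p\<bar> \<le> S * (C0 * real (Suc k) ^ d0)"
    proof (intro allI impI)
      fix p assume p: "p < m1"
      have "real_of_int \<bar>a p\<bar> \<le> (\<Sum>j\<in>{..<m1}. \<bar>real_of_int (c j * zcoords ?F m1 b1 ((th ^^ k) (b1 j)) p)\<bar>)"
        unfolding a_def of_int_abs of_int_sum by (rule sum_abs)
      also have "\<dots> \<le> (\<Sum>j\<in>{..<m1}. real_of_int \<bar>c j\<bar> * (C0 * real (Suc k) ^ d0))"
      proof (rule sum_mono)
        fix j assume j: "j \<in> {..<m1}"
        have "zcoords ?F m1 b1 ((th ^^ k) (b1 j)) p = (lcs_matrix G h 0 m1 b1 ^\<^sub>m k) $$ (p, j)"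
          using F.basis_column[OF B1 th_hom, of j k] j p by (simp add: lcs_matrix_eq)
        then show "\<bar>real_of_int (c j * zcoords ?F m1 b1 ((th ^^ k) (b1 j)) p)\<bar> \<le> real_of_int \<bar>c j\<bar> * (C0 * real (Suc k) ^ d0)"
          using bound[OF p, of j k] j by (simp add: abs_mult mult_left_mono)
      qed
      also have "\<dots> = S * (C0 * real (Suc k) ^ d0)" by (simp add: S_def sum_distrib_right)
      finally show "real_of_int \<bar>a p\<bar> \<le> S * (C0 * real (Suc k) ^ d0)" .
    qed
    ultimately have "(th ^^ k) E \<in> gspan ?F (b1 ` {..<m1}) (real m1 * (S * (C0 * real (Suc k) ^ d0)))"
      using F.zcomb_gspan[OF bc] S0 C0 by simp
    then show ?thesis by (simp add: algebra_simps)
  qed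
  show ?thesis unfolding grows_def
  proof (intro exI conjI allI)
    show "finite (b1 ` {..<m1})" by simp
    show "b1 ` {..<m1} \<subseteq> carrier ?F" using bc by auto
    show "0 \<le> real m1 * S * C0" using S0 C0 by simp
  qed (rule main)
qed

lemma final_bound: assumes base: "\<And>E. E \<in> carrier (lcs_free_factor G 0) \<Longrightarrow> grows 0 E"
  and Bn: "is_zbasis (lcs_free_factor G n) m b"
  shows "\<exists>C d. \<forall>k p j. p < m \<longrightarrow> j < m \<longrightarrow>
     real_of_int \<bar>(lcs_matrix G h n m b ^\<^sub>m k) $$ (p, j)\<bar> \<le> C * real (Suc k) ^ d"
proof -
  let ?F = "lcs_free_factor G n"
  interpret F: comm_group ?F by (rule F_comm)
  have bc: "\<forall>j<m. b j \<in> carrier ?F" using Bn by (simp add: is_zbasis_def)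
  have "\<forall>j. \<exists>T. j < m \<longrightarrow> (finite (fst T) \<and> fst T \<subseteq> carrier ?F \<and> fst (snd T) \<ge> 0 \<and>
      (\<forall>k. (th ^^ k) (b j) \<in> gspan ?F (fst T) (fst (snd T) * real (Suc k) ^ snd (snd T))))"
  proof
    fix j show "\<exists>T. j < m \<longrightarrow> (finite (fst T) \<and> fst T \<subseteq> carrier ?F \<and> fst (snd T) \<ge> 0 \<and>
      (\<forall>k. (th ^^ k) (b j) \<in> gspan ?F (fst T) (fst (snd T) * real (Suc k) ^ snd (snd T))))"
    proof (cases "j < m")
      case True
      then have gj: "grows n (b j)" using grows_all[OF base] bc by blast
      obtain X C d where "finite X" "X \<subseteq> carrier ?F" "C \<ge> 0"
        "\<And>k. (th ^^ k) (b j) \<in> gspan ?F X (C * real (Suc k) ^ d)" using growsE[OF gj] by metis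
      then show ?thesis by (intro exI[of _ "(X, C, d)"]) simp
    qed simp
  qed
  then obtain T where T: "\<And>j. j < m \<Longrightarrow> finite (fst (T j)) \<and> fst (T j) \<subseteq> carrier ?F \<and> fst (snd (T j)) \<ge> 0 \<and>
      (\<forall>k. (th ^^ k) (b j) \<in> gspan ?F (fst (T j)) (fst (snd (T j)) * real (Suc k) ^ snd (snd (T j))))"
    by metis
  define Xf where "Xf j = fst (T j)" for j
  define Cf where "Cf j = fst (snd (T j))" for j
  define df where "df j = snd (snd (T j))" for j
  define K where "K j = (\<Sum>x\<in>Xf j. \<Sum>q<m. real_of_int \<bar>zcoords ?F m b x q\<bar>)" for j
  define C where "C = (\<Sum>j<m. Cf j * K j)"
  define d where "d = (\<Sum>j<m. df j)"
  have K0: "K j \<ge> 0" for j by (simp add: K_def sum_nonneg)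
  have Cf0: "j < m \<Longrightarrow> Cf j \<ge> 0" for j using T by (simp add: Cf_def)
  have "\<forall>k p j. p < m \<longrightarrow> j < m \<longrightarrow> real_of_int \<bar>(lcs_matrix G h n m b ^\<^sub>m k) $$ (p, j)\<bar> \<le> C * real (Suc k) ^ d"
  proof (intro allI impI)
    fix k p j assume p: "p < m" and j: "j < m"
    have Tj: "finite (Xf j)" "Xf j \<subseteq> carrier ?F" "Cf j \<ge> 0"
      "(th ^^ k) (b j) \<in> gspan ?F (Xf j) (Cf j * real (Suc k) ^ df j)"
      using T[OF j] by (auto simp: Xf_def Cf_def df_def)
    have "(lcs_matrix G h n m b ^\<^sub>m k) $$ (p, j) = zcoords ?F m b ((th ^^ k) (b j)) p"
      using F.basis_column[OF Bn th_hom j, of k] p by (simp add: lcs_matrix_eq)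
    then have "real_of_int \<bar>(lcs_matrix G h n m b ^\<^sub>m k) $$ (p, j)\<bar> \<le> (Cf j * real (Suc k) ^ df j) * K j"
      using F.gspan_coords[OF Bn Tj(1,2,4) _ p] Tj(3) by (simp add: K_def)
    also have "\<dots> \<le> (Cf j * real (Suc k) ^ d) * K j"
    proof -
      have "df j \<le> d" unfolding d_def using member_le_sum[of j "{..<m}" df] j by simp
      then have "real (Suc k) ^ df j \<le> real (Suc k) ^ d" by (intro power_increasing) auto
      then show ?thesis using Tj(3) K0[of j] by (intro mult_right_mono mult_left_mono) auto
    qed
    also have "\<dots> = (Cf j * K j) * real (Suc k) ^ d" by simp
    also have "\<dots> \<le> C * real (Suc k) ^ d"
    proof (rule mult_right_mono)
      show "Cf j * K j \<le> C" unfolding C_def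
        by (rule member_le_sum[of j "{..<m}" "\<lambda>j. Cf j * K j"]) (use j Cf0 K0 in auto)
    qed simp
    finally show "real_of_int \<bar>(lcs_matrix G h n m b ^\<^sub>m k) $$ (p, j)\<bar> \<le> C * real (Suc k) ^ d" .
  qed
  then show ?thesis by blast
qed

end
lemma poly_exp_lim: "(r::real) > 1 \<Longrightarrow> ((\<lambda>k::nat. real (Suc k) ^ d / r ^ k) \<longlongrightarrow> 0) sequentially"
  by real_asymp

lemma exp_beats_poly: assumes r: "(r::real) > 1" and a: "a > 0"
  shows "\<exists>k. K * real (Suc k) ^ d < a * r ^ k"
proof -
  have "((\<lambda>k::nat. real (Suc k) ^ d / r ^ k) \<longlongrightarrow> 0) sequentially" by (rule poly_exp_lim[OF r])
  moreover have "a / (\<bar>K\<bar> + 1) > 0" using a by simp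
  ultimately have "eventually (\<lambda>k. real (Suc k) ^ d / r ^ k < a / (\<bar>K\<bar> + 1)) sequentially"
    by (rule order_tendstoD(2))
  then obtain k where k: "real (Suc k) ^ d / r ^ k < a / (\<bar>K\<bar> + 1)"
    by (auto simp: eventually_sequentially)
  have rk: "r ^ k > 0" using r by simp
  have "real (Suc k) ^ d < a / (\<bar>K\<bar> + 1) * r ^ k" using k rk by (simp add: divide_less_eq)
  then have "(\<bar>K\<bar> + 1) * real (Suc k) ^ d < a * r ^ k"
    by (simp add: field_simps)
  moreover have "K * real (Suc k) ^ d \<le> (\<bar>K\<bar> + 1) * real (Suc k) ^ d"
    by (intro mult_right_mono) auto
  ultimately show ?thesis by (intro exI[of _ k]) linarith
qed

lemma eig_le1_from_bound:
  fixes A :: "int mat"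
  assumes A: "A \<in> carrier_mat m m"
    and bound: "\<And>k p j. p < m \<Longrightarrow> j < m \<Longrightarrow> real_of_int \<bar>(A ^\<^sub>m k) $$ (p, j)\<bar> \<le> C * real (Suc k) ^ d"
    and ev: "eigenvalue (map_mat (of_int :: int \<Rightarrow> complex) A) c"
  shows "cmod c \<le> 1"
proof (rule ccontr)
  assume c: "\<not> cmod c \<le> 1"
  let ?A = "map_mat (of_int :: int \<Rightarrow> complex) A"
  have Ac: "?A \<in> carrier_mat m m" using A by simp
  obtain v where v: "eigenvector ?A v c" using ev unfolding eigenvalue_def by blast
  have vc: "v \<in> carrier_vec m" and v0: "v \<noteq> 0\<^sub>v m" using v A by (auto simp: eigenvector_def)
  obtain p where p: "p < m" "v $ p \<noteq> 0"
    using v0 vc by (metis carrier_vecD eq_vecI index_zero_vec(1) index_zero_vec(2))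
  define V where "V = (\<Sum>j<m. cmod (v $ j))"
  have pow: "?A ^\<^sub>m k = map_mat of_int (A ^\<^sub>m k)" for k
    by (rule of_int_hom.mat_hom_pow[OF A, symmetric])
  have gen: "cmod c ^ k * cmod (v $ p) \<le> C * real (Suc k) ^ d * V" for k
  proof -
    have "c ^ k * v $ p = (?A ^\<^sub>m k *\<^sub>v v) $ p" using eigenvector_pow[OF Ac v, of k] p vc by simp
    also have "\<dots> = (\<Sum>j<m. of_int ((A ^\<^sub>m k) $$ (p, j)) * v $ j)"
      using p vc A by (simp add: pow scalar_prod_def lessThan_atLeast0)
    finally have "cmod (c ^ k * v $ p) = cmod (\<Sum>j<m. of_int ((A ^\<^sub>m k) $$ (p, j)) * v $ j)" by simp
    also have "\<dots> \<le> (\<Sum>j<m. cmod (of_int ((A ^\<^sub>m k) $$ (p, j)) * v $ j))" by (rule norm_sum)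
    also have "\<dots> \<le> (\<Sum>j<m. C * real (Suc k) ^ d * cmod (v $ j))"
    proof (rule sum_mono)
      fix j assume j: "j \<in> {..<m}"
      have "cmod (of_int ((A ^\<^sub>m k) $$ (p, j)) :: complex) = real_of_int \<bar>(A ^\<^sub>m k) $$ (p, j)\<bar>"
        by (simp only: norm_of_int)
      then show "cmod (of_int ((A ^\<^sub>m k) $$ (p, j)) * v $ j) \<le> C * real (Suc k) ^ d * cmod (v $ j)"
        using bound[OF p(1), of j k] j by (simp add: norm_mult mult_right_mono)
    qed
    also have "\<dots> = C * real (Suc k) ^ d * V" by (simp add: V_def sum_distrib_left)
    finally show ?thesis by (simp add: norm_mult norm_power)
  qed
  obtain k where k: "C * V * real (Suc k) ^ d < cmod (v $ p) * cmod c ^ k"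
    using exp_beats_poly[of "cmod c" "cmod (v $ p)" "C * V" d] c p by auto
  have e1: "C * real (Suc k) ^ d * V = C * V * real (Suc k) ^ d" by (simp add: mult_ac)
  have e2: "cmod c ^ k * cmod (v $ p) = cmod (v $ p) * cmod c ^ k" by (simp add: mult_ac)
  show False using gen[of k] k e1 e2 by linarith
qed

lemma poly_bound_from_eig:
  fixes A :: "int mat"
  assumes A: "A \<in> carrier_mat m m"
    and ev: "\<And>c. eigenvalue (map_mat (of_int :: int \<Rightarrow> complex) A) c \<Longrightarrow> cmod c \<le> 1"
  shows "\<exists>C d. C \<ge> 0 \<and> (\<forall>k p j. p < m \<longrightarrow> j < m \<longrightarrow> real_of_int \<bar>(A ^\<^sub>m k) $$ (p, j)\<bar> \<le> C * real (Suc k) ^ d)"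
proof (cases "m = 0")
  case True then show ?thesis by (intro exI[of _ 0]) auto
next
  case False
  let ?A = "map_mat (of_int :: int \<Rightarrow> complex) A"
  have Ac: "?A \<in> carrier_mat m m" using A by simp
  have "spectral_radius ?A \<in> norm ` spectrum ?A" using spectral_radius_mem_max(1)[OF Ac] False by simp
  then have sr: "spectral_radius ?A \<le> 1" using ev by (auto simp: spectrum_def)
  obtain c1 c2 where nb: "\<And>k. norm_bound (?A ^\<^sub>m k) (c1 + c2 * real k ^ (m - 1))"
    using spectral_radius_jnf_norm_bound_le_1_upper_triangular[OF Ac sr] by blast
  have pow: "?A ^\<^sub>m k = map_mat of_int (A ^\<^sub>m k)" for k
    by (rule of_int_hom.mat_hom_pow[OF A, symmetric])
  show ?thesis
  proof (intro exI[of _ "\<bar>c1\<bar> + \<bar>c2\<bar>"] exI[of _ "m - 1"] conjI allI impI)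
    fix k p j assume p: "p < m" and j: "j < m"
    have "cmod ((?A ^\<^sub>m k) $$ (p, j)) \<le> c1 + c2 * real k ^ (m - 1)"
      using nb[of k] p j A unfolding norm_bound_def by simp
    moreover have "cmod ((?A ^\<^sub>m k) $$ (p, j)) = real_of_int \<bar>(A ^\<^sub>m k) $$ (p, j)\<bar>"
      using p j A by (simp add: pow)
    moreover have "c1 + c2 * real k ^ (m - 1) \<le> (\<bar>c1\<bar> + \<bar>c2\<bar>) * real (Suc k) ^ (m - 1)"
    proof -
      have 1: "1 \<le> real (Suc k) ^ (m - 1)" by simp
      have 2: "real k ^ (m - 1) \<le> real (Suc k) ^ (m - 1)" by (intro power_mono) auto
      have "\<bar>c1\<bar> * 1 \<le> \<bar>c1\<bar> * real (Suc k) ^ (m - 1)" by (rule mult_left_mono[OF 1]) simp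
      then have "c1 \<le> \<bar>c1\<bar> * real (Suc k) ^ (m - 1)" by linarith
      moreover have "c2 * real k ^ (m - 1) \<le> \<bar>c2\<bar> * real k ^ (m - 1)" by (rule mult_right_mono) auto
      moreover have "\<bar>c2\<bar> * real k ^ (m - 1) \<le> \<bar>c2\<bar> * real (Suc k) ^ (m - 1)" by (rule mult_left_mono[OF 2]) simp
      ultimately show ?thesis by (simp add: distrib_right)
    qed
    ultimately show "real_of_int \<bar>(A ^\<^sub>m k) $$ (p, j)\<bar> \<le> (\<bar>c1\<bar> + \<bar>c2\<bar>) * real (Suc k) ^ (m - 1)" by simp
  qed simp
qed

lemma eig_inverse:
  fixes A B :: "complex mat"
  assumes A: "A \<in> carrier_mat m m" and B: "B \<in> carrier_mat m m" and BA: "B * A = 1\<^sub>m m"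
    and ev: "eigenvalue A c"
  shows "c \<noteq> 0 \<and> eigenvalue B (inverse c)"
proof -
  obtain v where v: "eigenvector A v c" using ev unfolding eigenvalue_def by blast
  have vc: "v \<in> carrier_vec m" and v0: "v \<noteq> 0\<^sub>v m" and Av: "A *\<^sub>v v = c \<cdot>\<^sub>v v" using v A by (auto simp: eigenvector_def)
  have "v = B *\<^sub>v (A *\<^sub>v v)" using BA A B vc by (metis assoc_mult_mat_vec one_mult_mat_vec)
  also have "\<dots> = c \<cdot>\<^sub>v (B *\<^sub>v v)" using Av B vc by (simp add: mult_mat_vec)
  finally have eq: "v = c \<cdot>\<^sub>v (B *\<^sub>v v)" .
  have c0: "c \<noteq> 0"
  proof
    assume "c = 0"
    moreover have "0 \<cdot>\<^sub>v (B *\<^sub>v v) = 0\<^sub>v m" by (rule eq_vecI) (use B in auto)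
    ultimately have "v = 0\<^sub>v m" using eq by simp
    then show False using v0 by simp
  qed
  have "B *\<^sub>v v = inverse c \<cdot>\<^sub>v v"
  proof -
    have "inverse c \<cdot>\<^sub>v v = inverse c \<cdot>\<^sub>v (c \<cdot>\<^sub>v (B *\<^sub>v v))" using eq by simp
    also have "\<dots> = B *\<^sub>v v" using c0 by (simp add: smult_smult_assoc)
    finally show ?thesis by simp
  qed
  then have "eigenvector B v (inverse c)" using vc v0 B by (simp add: eigenvector_def)
  then show ?thesis using c0 unfolding eigenvalue_def by blast
qed



lemma lcs_matrix_carrier: "lcs_matrix G h i m b \<in> carrier_mat m m"
  by (simp add: lcs_matrix_def basis_matrix_def)

context autpair begin

lemma autpair_sym: "autpair G h' h"
  by (rule autpair.intro[OF is_group]) (unfold_locales, use h h' inv1 inv2 in auto)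

lemma th_inv: assumes D: "D \<in> carrier (lcs_free_factor G i)"
  shows "induced_free_aut h' (th D) = D"
proof -
  interpret S: autpair G h' h by (rule autpair_sym)
  obtain u where u: "u \<in> lcs G i" "D = lpr G i u" using F_rep[OF D] by blast
  have "th D = lpr G i (h u)" using th_lpr u by simp
  moreover have "induced_free_aut h' (lpr G i (h u)) = lpr G i (h' (h u))"
    by (rule S.th_lpr[OF lcs_hom[OF h u(1)]])
  moreover have "h' (h u) = u" using inv2 lcs_carrier[OF u(1)] by simp
  ultimately show ?thesis using u by simp
qed

lemma mat_inv: assumes B: "is_zbasis (lcs_free_factor G i) m b"
  shows "lcs_matrix G h' i m b * lcs_matrix G h i m b = 1\<^sub>m m"
proof -
  interpret S: autpair G h' h by (rule autpair_sym)
  interpret F: comm_group "lcs_free_factor G i" by (rule F_comm)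
  have bc: "\<And>j. j < m \<Longrightarrow> b j \<in> carrier (lcs_free_factor G i)" using B by (simp add: is_zbasis_def)
  have "basis_matrix (lcs_free_factor G i) m b (\<lambda>x. induced_free_aut h' (th x)) =
     basis_matrix (lcs_free_factor G i) m b (induced_free_aut h') * basis_matrix (lcs_free_factor G i) m b th"
    by (rule F.basis_matrix_comp[OF B th_hom S.th_hom])
  moreover have "basis_matrix (lcs_free_factor G i) m b (\<lambda>x. induced_free_aut h' (th x)) = 1\<^sub>m m"
    by (rule F.basis_matrix_id[OF B]) (rule th_inv, erule bc)
  ultimately show ?thesis by (simp add: lcs_matrix_def)
qed

lemma growth_le1: assumes B1: "is_zbasis (lcs_free_factor G 0) m1 b1"
  and ev1: "\<And>c. eigenvalue (map_mat (of_int :: int \<Rightarrow> complex) (lcs_matrix G h 0 m1 b1)) c \<Longrightarrow> cmod c \<le> 1"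
  and Bn: "is_zbasis (lcs_free_factor G n) m b"
  and ev: "eigenvalue (map_mat (of_int :: int \<Rightarrow> complex) (lcs_matrix G h n m b)) c"
  shows "cmod c \<le> 1"
proof -
  obtain C0 d0 where C0: "C0 \<ge> 0" and bd: "\<forall>k p j. p < m1 \<longrightarrow> j < m1 \<longrightarrow>
      real_of_int \<bar>(lcs_matrix G h 0 m1 b1 ^\<^sub>m k) $$ (p, j)\<bar> \<le> C0 * real (Suc k) ^ d0"
    using poly_bound_from_eig[OF lcs_matrix_carrier ev1] by blast
  have base: "\<And>E. E \<in> carrier (lcs_free_factor G 0) \<Longrightarrow> grows 0 E"
    by (rule base_grows[OF B1 C0]) (use bd in auto)
  obtain C d where bdn: "\<forall>k p j. p < m \<longrightarrow> j < m \<longrightarrow>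
      real_of_int \<bar>(lcs_matrix G h n m b ^\<^sub>m k) $$ (p, j)\<bar> \<le> C * real (Suc k) ^ d"
    using final_bound[OF base Bn] by blast
  show ?thesis by (rule eig_le1_from_bound[OF lcs_matrix_carrier _ ev]) (use bdn in auto)
qed

end

lemma map_mat_inv: assumes "(B :: int mat) * A = 1\<^sub>m m" "A \<in> carrier_mat m m" "B \<in> carrier_mat m m"
  shows "map_mat (of_int :: int \<Rightarrow> complex) B * map_mat of_int A = 1\<^sub>m m"
proof -
  have "map_mat (of_int :: int \<Rightarrow> complex) B * map_mat of_int A = map_mat of_int (B * A)"
    by (rule of_int_hom.mat_hom_mult[OF assms(3) assms(2), symmetric])
  also have "\<dots> = map_mat of_int (1\<^sub>m m)" using assms(1) by simp
  also have "\<dots> = 1\<^sub>m m" by (rule of_int_hom.mat_hom_one)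
  finally show ?thesis .
qed

theorem lemma7p1:
  fixes G :: "('a, 'b) monoid_scheme" and \<phi> :: "'a \<Rightarrow> 'a"
  assumes "group G" and "nilpotent_group G" and "finitely_generated G"
    and "\<phi> \<in> iso G G"
    and "is_zbasis (lcs_free_factor G 0) m1 b1"
    and "\<And>c. eigenvalue (map_mat (of_int :: int \<Rightarrow> complex) (lcs_matrix G \<phi> 0 m1 b1)) c
            \<Longrightarrow> cmod c = 1"
    and "is_zbasis (lcs_free_factor G n) m b"
  shows "\<forall>c. eigenvalue (map_mat (of_int :: int \<Rightarrow> complex) (lcs_matrix G \<phi> n m b)) c
            \<longrightarrow> cmod c = 1"
proof -
  interpret group G by (rule assms(1))
  define \<psi> where "\<psi> = inv_into (carrier G) \<phi>"
  have iso: "\<phi> \<in> iso G G" by (rule assms(4))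
  have hphi: "\<phi> \<in> hom G G" using iso by (simp add: iso_def)
  have bij: "bij_betw \<phi> (carrier G) (carrier G)" using iso by (simp add: iso_def)
  have hpsi: "\<psi> \<in> hom G G" using iso_set_sym[OF iso] by (simp add: \<psi>_def iso_def)
  have i1: "\<phi> (\<psi> x) = x" if "x \<in> carrier G" for x
    using bij that unfolding \<psi>_def by (simp add: bij_betw_def f_inv_into_f)
  have i2: "\<psi> (\<phi> x) = x" if "x \<in> carrier G" for x
    using bij that unfolding \<psi>_def by (simp add: bij_betw_def inv_into_f_f)
  interpret P: autpair G \<phi> \<psi> by (rule autpair.intro[OF assms(1)]) (unfold_locales, use hphi hpsi i1 i2 in auto)
  interpret Q: autpair G \<psi> \<phi> by (rule P.autpair_sym)
  let ?A1 = "lcs_matrix G \<phi> 0 m1 b1" and ?B1 = "lcs_matrix G \<psi> 0 m1 b1"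
  have ev1P: "cmod c \<le> 1" if "eigenvalue (map_mat (of_int :: int \<Rightarrow> complex) ?A1) c" for c
    using assms(6)[OF that] by simp
  have ev1Q: "cmod c \<le> 1" if ev: "eigenvalue (map_mat (of_int :: int \<Rightarrow> complex) ?B1) c" for c
  proof -
    have "?A1 * ?B1 = 1\<^sub>m m1" by (rule Q.mat_inv[OF assms(5)])
    then have "map_mat (of_int :: int \<Rightarrow> complex) ?A1 * map_mat of_int ?B1 = 1\<^sub>m m1"
      by (rule map_mat_inv) (rule lcs_matrix_carrier)+
    moreover have "map_mat (of_int :: int \<Rightarrow> complex) ?A1 \<in> carrier_mat m1 m1"
      using lcs_matrix_carrier[of G \<phi> 0 m1 b1] by simp
    moreover have "map_mat (of_int :: int \<Rightarrow> complex) ?B1 \<in> carrier_mat m1 m1"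
      using lcs_matrix_carrier[of G \<psi> 0 m1 b1] by simp
    ultimately have "c \<noteq> 0 \<and> eigenvalue (map_mat (of_int :: int \<Rightarrow> complex) ?A1) (inverse c)"
      using eig_inverse ev by blast
    then have "cmod (inverse c) = 1" using assms(6) by blast
    then show ?thesis by (simp add: norm_inverse)
  qed
  show ?thesis
  proof (intro allI impI)
    fix c assume ev: "eigenvalue (map_mat (of_int :: int \<Rightarrow> complex) (lcs_matrix G \<phi> n m b)) c"
    have le: "cmod c \<le> 1" by (rule P.growth_le1[OF assms(5) ev1P assms(7) ev])
    have "lcs_matrix G \<psi> n m b * lcs_matrix G \<phi> n m b = 1\<^sub>m m" by (rule P.mat_inv[OF assms(7)])
    then have "map_mat (of_int :: int \<Rightarrow> complex) (lcs_matrix G \<psi> n m b) * map_mat of_int (lcs_matrix G \<phi> n m b) = 1\<^sub>m m"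
      by (rule map_mat_inv) (rule lcs_matrix_carrier)+
    moreover have "map_mat (of_int :: int \<Rightarrow> complex) (lcs_matrix G \<phi> n m b) \<in> carrier_mat m m"
      using lcs_matrix_carrier[of G \<phi> n m b] by simp
    moreover have "map_mat (of_int :: int \<Rightarrow> complex) (lcs_matrix G \<psi> n m b) \<in> carrier_mat m m"
      using lcs_matrix_carrier[of G \<psi> n m b] by simp
    ultimately have c0: "c \<noteq> 0"
      and ev': "eigenvalue (map_mat (of_int :: int \<Rightarrow> complex) (lcs_matrix G \<psi> n m b)) (inverse c)"
      using eig_inverse ev by blast+
    have "cmod (inverse c) \<le> 1" by (rule Q.growth_le1[OF assms(5) ev1Q assms(7) ev'])
    then have "1 \<le> cmod c" using c0 by (simp add: norm_inverse inverse_le_1_iff)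
    with le show "cmod c = 1" by simp
  qed
qed

end
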